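(* Let $n\ge 2$ be an integer and $\Pi_2,\Pi_3>0$. Let $\mathbb{D}^2$ be the $n\times n$ circulant matrix with first row $(-2,1,0,\ldots,0,1)$, and let $A=\begin{bmatrix}0&I\\ \mathbb{D}^2&0\end{bmatrix}\in\mathbb{R}^{2n\times 2n}$, $B=\begin{bmatrix}0\\ I\end{bmatrix}\in\mathbb{R}^{2n\times n}$. Consider the linear quadratic regulator problem: minimize $$\int_0^\infty \boldsymbol{\Phi}(\tau)^T\begin{bmatrix}I&0\\0&\Pi_2 I\end{bmatrix}\boldsymbol{\Phi}(\tau)+\frac{1}{\Pi_3^2}\boldsymbol{\omega}(\tau)^T\boldsymbol{\omega}(\tau)\,d\tau$$ subject to $\frac{d}{d\tau}\boldsymbol{\Phi}(\tau)=A\boldsymbol{\Phi}(\tau)+B\boldsymbol{\omega}(\tau)$, with state $\boldsymbol{\Phi}(\tau)\in\mathbb{R}^{2n}$ and control $\boldsymbol{\omega}(\tau)\in\mathbb{R}^n$. Then the optimal feedback gain $K$ (so that the optimal control is $\boldsymbol{\omega}=-K\boldsymbol{\Phi}$) is $K=\begin{bmatrix}K_1&K_2\end{bmatrix}$ where $K_1,K_2$ are the circulant matrices $$K_1=F^{-1}\mathrm{diag}\big(\hat{K}_0(\kappa)\big)F,\qquad K_2=F^{-1}\mathrm{diag}\Big(\sqrt{2\hat{K}_0(\kappa)+\Pi_2\Pi_3^2}\Big)F,$$ with, for $\kappa\in\{0,\ldots,n-1\}$, $$\hat{K}_0(\kappa)=\hat{D}_{\kappa\kappa}+\sqrt{\hat{D}_{\kappa\kappa}^2+\Pi_3^2},\qquad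 \hat{D}_{\kappa\kappa}=-4\sin^2\!\left(\frac{\pi\kappa}{n}\right).$$ Equivalently, in the spatial frequency domain, $\hat{K}(\kappa)=\begin{bmatrix}\hat{K}_0(\kappa)&\sqrt{2\hat{K}_0(\kappa)+\Pi_2\Pi_3^2}\end{bmatrix}$.
   Context: $F$ denotes the $n\times n$ unitary discrete Fourier transform matrix, $F_{kj}=n^{-1/2}e^{-2\pi i kj/n}$ for $k,j\in\{0,\ldots,n-1\}$; $\mathrm{diag}(f(\kappa))$ is the $n\times n$ diagonal matrix whose $\kappa$-th diagonal entry is $f(\kappa)$, $\kappa=0,\ldots,n-1$. The optimal feedback gain of the LQR problem with cost $\int \boldsymbol{\Phi}^TQ\boldsymbol{\Phi}+\boldsymbol{\omega}^TR\boldsymbol{\omega}$ is $K=R^{-1}B^TP$, where $P$ is the symmetric positive definite (stabilizing) solution of the algebraic Riccati equation $PA+A^TP-PBR^{-1}B^TP+Q=0$. The nondimensional variables arise from the spatial discretization of the wave equation $\partial_t^2p=c^2\partial_x^2p+u$ on a circle, with $\Pi_2,\Pi_3$ weights on kinetic energy and (inverse) control effort. *)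

theory Defs
  imports "Jordan_Normal_Form.Matrix" "Jordan_Normal_Form.Char_Poly"
begin

definition mat_inv :: "'a :: field mat \<Rightarrow> 'a mat" where
  "mat_inv M = (THE M'. M' \<in> carrier_mat (dim_row M) (dim_row M) \<and>
                        M * M' = 1\<^sub>m (dim_row M) \<and> M' * M = 1\<^sub>m (dim_row M))"

(* horizontal concatenation [X Y] *)
definition hcat :: "'a :: zero mat \<Rightarrow> 'a mat \<Rightarrow> 'a mat" where
  "hcat X Y = four_block_mat X Y (0\<^sub>m 0 (dim_col X)) (0\<^sub>m 0 (dim_col Y))"

(* D^2 = -2 I + S + S^T, S the cyclic shift: circulant with first row (-2,1,0,...,0,1) *)
definition D2 :: "nat \<Rightarrow> real mat" where
  "D2 n = mat n n (\<lambda>(i,j). (if i = j then -2 else 0)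
                         + (if j = (i + 1) mod n then 1 else 0)
                         + (if i = (j + 1) mod n then 1 else 0))"

definition Amat :: "nat \<Rightarrow> real mat" where
  "Amat n = four_block_mat (0\<^sub>m n n) (1\<^sub>m n) (D2 n) (0\<^sub>m n n)"

definition Bmat :: "nat \<Rightarrow> real mat" where
  "Bmat n = (0\<^sub>m n n) @\<^sub>r (1\<^sub>m n)"

definition Qmat :: "nat \<Rightarrow> real \<Rightarrow> real mat" where
  "Qmat n \<Pi>2 = four_block_mat (1\<^sub>m n) (0\<^sub>m n n) (0\<^sub>m n n) (\<Pi>2 \<cdot>\<^sub>m 1\<^sub>m n)"

definition Rmat :: "nat \<Rightarrow> real \<Rightarrow> real mat" where
  "Rmat n \<Pi>3 = (1 / \<Pi>3\<^sup>2) \<cdot>\<^sub>m 1\<^sub>m n"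

definition pos_def_mat :: "real mat \<Rightarrow> bool" where
  "pos_def_mat P \<longleftrightarrow> (\<forall>x \<in> carrier_vec (dim_row P). x \<noteq> 0\<^sub>v (dim_row P) \<longrightarrow> x \<bullet> (P *\<^sub>v x) > 0)"

definition hurwitz :: "real mat \<Rightarrow> bool" where
  "hurwitz M \<longleftrightarrow> (\<forall>z. eigenvalue (map_mat complex_of_real M) z \<longrightarrow> Re z < 0)"

definition care_solution :: "real mat \<Rightarrow> real mat \<Rightarrow> real mat \<Rightarrow> real mat \<Rightarrow> real mat \<Rightarrow> bool" where
  "care_solution A B Q R P \<longleftrightarrow>
     P \<in> carrier_mat (dim_row A) (dim_row A) \<and> P\<^sup>T = P \<and> pos_def_mat P \<and>
     P * A + A\<^sup>T * P - P * B * mat_inv R * B\<^sup>T * P + Q = 0\<^sub>m (dim_row A) (dim_row A) \<and>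
     hurwitz (A - B * mat_inv R * B\<^sup>T * P)"

definition lqr_gain :: "real mat \<Rightarrow> real mat \<Rightarrow> real mat \<Rightarrow> real mat" where
  "lqr_gain B R P = mat_inv R * B\<^sup>T * P"

definition DFT :: "nat \<Rightarrow> complex mat" where
  "DFT n = mat n n (\<lambda>(k,j). complex_of_real (1 / sqrt (real n)) *
                            cis (- 2 * pi * real k * real j / real n))"

definition diag_c :: "nat \<Rightarrow> (nat \<Rightarrow> complex) \<Rightarrow> complex mat" where
  "diag_c n f = mat n n (\<lambda>(i,j). if i = j then f i else 0)"

definition Dhat :: "nat \<Rightarrow> nat \<Rightarrow> real" where
  "Dhat n \<kappa> = - 4 * (sin (pi * real \<kappa> / real n))\<^sup>2"

definition K0hat :: "nat \<Rightarrow> real \<Rightarrow> nat \<Rightarrow> real" where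
  "K0hat n \<Pi>3 \<kappa> = Dhat n \<kappa> + sqrt ((Dhat n \<kappa>)\<^sup>2 + \<Pi>3\<^sup>2)"

definition K1mat :: "nat \<Rightarrow> real \<Rightarrow> complex mat" where
  "K1mat n \<Pi>3 = mat_inv (DFT n) * diag_c n (\<lambda>\<kappa>. complex_of_real (K0hat n \<Pi>3 \<kappa>)) * DFT n"

definition K2mat :: "nat \<Rightarrow> real \<Rightarrow> real \<Rightarrow> complex mat" where
  "K2mat n \<Pi>2 \<Pi>3 = mat_inv (DFT n) *
      diag_c n (\<lambda>\<kappa>. complex_of_real (sqrt (2 * K0hat n \<Pi>3 \<kappa> + \<Pi>2 * \<Pi>3\<^sup>2))) * DFT n"

end

theory Submission
  imports Defs "Jordan_Normal_Form.Schur_Decomposition"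
begin

definition Uh :: "nat \<Rightarrow> complex mat" where
  "Uh n = mat n n (\<lambda>(i,j). cnj (DFT n $$ (j,i)))"

lemma DFT_carrier[simp]: "DFT n \<in> carrier_mat n n" by (simp add: DFT_def)
lemma Uh_carrier[simp]: "Uh n \<in> carrier_mat n n" by (simp add: Uh_def)
lemma diag_c_carrier[simp]: "diag_c n f \<in> carrier_mat n n" by (simp add: diag_c_def)
lemma dims_simps[simp]: "dim_row (DFT n) = n" "dim_col (DFT n) = n" "dim_row (Uh n) = n" "dim_col (Uh n) = n"
  "dim_row (diag_c n f) = n" "dim_col (diag_c n f) = n"
  by (simp_all add: DFT_def Uh_def diag_c_def)

lemma DFT_idx: "k < n \<Longrightarrow> j < n \<Longrightarrow> DFT n $$ (k,j) =
   complex_of_real (1 / sqrt (real n)) * cis (- 2 * pi * real k * real j / real n)"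
  by (simp add: DFT_def)

lemma DFT_sym: "k < n \<Longrightarrow> j < n \<Longrightarrow> DFT n $$ (k,j) = DFT n $$ (j,k)"
  by (simp add: DFT_idx mult_ac)

lemma Uh_idx: "i < n \<Longrightarrow> j < n \<Longrightarrow> Uh n $$ (i,j) = cnj (DFT n $$ (j,i))"
  by (simp add: Uh_def)

lemma orth_sum:
  assumes n: "n > 0"
  shows "(\<Sum>k\<in>{0..<n}. cis (2 * pi * real k * of_int m / real n)) = (if int n dvd m then of_nat n else 0)"
proof -
  define z where "z = cis (2*pi*of_int m / real n)"
  have pw: "cis (2 * pi * real k * of_int m / real n) = z ^ k" for k
    by (simp add: z_def DeMoivre mult_ac)
  have zn: "z ^ n = 1"
  proof -
    have "z ^ n = cis (real n * (2*pi*of_int m / real n))" by (simp add: z_def DeMoivre)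
    also have "real n * (2*pi*of_int m / real n) = 2 * pi * of_int m" using n by simp
    also have "cis (2 * pi * of_int m) = 1" by (rule cis_multiple_2pi) simp
    finally show ?thesis .
  qed
  have S: "(\<Sum>k\<in>{0..<n}. cis (2 * pi * real k * of_int m / real n)) = (\<Sum>k<n. z ^ k)"
    by (simp add: pw lessThan_atLeast0)
  show ?thesis
  proof (cases "int n dvd m")
    case True
    then obtain q where q: "m = int n * q" by auto
    have e: "2*pi*of_int m / real n = 2*pi*real_of_int q" using n by (simp add: q)
    have "z = 1" by (metis z_def e cis_multiple_2pi Ints_of_int)
    then show ?thesis using S True by simp
  next
    case False
    have "z \<noteq> 1"
    proof
      assume "z = 1"
      then have "cos (2*pi*of_int m / real n) = 1" unfolding z_def by (metis cis.sel(1) one_complex.sel(1))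
      then obtain x :: int where x: "2*pi*of_int m / real n = real_of_int x * 2 * pi"
        using cos_one_2pi_int by blast
      then have "of_int m = real_of_int x * real n" using n by (simp add: field_simps)
      then have "m = x * int n" by (metis of_int_eq_iff of_int_mult of_int_of_nat_eq)
      then show False using False by simp
    qed
    then show ?thesis using S False zn by (simp add: sum_gp_strict)
  qed
qed

lemma dvd_diff_iff:
  assumes "i < n" "j < n"
  shows "int n dvd (int i - int j) \<longleftrightarrow> i = j"
proof
  assume d: "int n dvd (int i - int j)"
  show "i = j"
  proof (rule ccontr)
    assume "i \<noteq> j"
    then have "int i - int j \<noteq> 0" by simp
    from dvd_imp_le_int[OF this d] have "int n \<le> \<bar>int i - int j\<bar>" by simp
    then show False using assms by linarith
  qed
qed simp

lemma DFT_prod: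
  assumes "k < n" "i < n" "j < n"
  shows "cnj (DFT n $$ (k,i)) * DFT n $$ (k,j) =
     cis (2 * pi * real k * of_int (int i - int j) / real n) / of_nat n"
proof -
  have n: "n > 0" using assms by simp
  define c where "c = 1 / sqrt (real n)"
  have r: "c * c = 1 / real n" using n unfolding c_def by simp
  have "cnj (DFT n $$ (k,i)) * DFT n $$ (k,j) =
     (cnj (complex_of_real c) * complex_of_real c) *
     (cnj (cis (- 2 * pi * real k * real i / real n)) * cis (- 2 * pi * real k * real j / real n))"
    unfolding DFT_idx[OF assms(1,2)] DFT_idx[OF assms(1,3)] complex_cnj_mult c_def by (simp only: mult_ac)
  also have "cnj (complex_of_real c) * complex_of_real c = 1 / of_nat n"
    by (metis r complex_cnj_complex_of_real of_real_mult of_real_divide of_real_1 of_real_of_nat_eq)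
  also have "cnj (cis (- 2 * pi * real k * real i / real n)) * cis (- 2 * pi * real k * real j / real n)
      = cis (2 * pi * real k * of_int (int i - int j) / real n)"
    by (simp add: cis_cnj cis_mult algebra_simps diff_divide_distrib)
  finally show ?thesis by simp
qed

lemma Uh_U: "Uh n * DFT n = 1\<^sub>m n"
proof (rule eq_matI)
  fix i j assume i: "i < dim_row (1\<^sub>m n :: complex mat)" and j: "j < dim_col (1\<^sub>m n :: complex mat)"
  then have i: "i < n" and j: "j < n" by auto
  have "(Uh n * DFT n) $$ (i,j) = (\<Sum>k\<in>{0..<n}. cnj (DFT n $$ (k,i)) * DFT n $$ (k,j))"
    using i j by (simp add: scalar_prod_def Uh_idx)
  also have "\<dots> = (\<Sum>k\<in>{0..<n}. cis (2 * pi * real k * of_int (int i - int j) / real n)) / of_nat n"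
    by (simp add: DFT_prod i j sum_divide_distrib)
  also have "\<dots> = 1\<^sub>m n $$ (i,j)" using i j orth_sum[of n "int i - int j"] dvd_diff_iff[OF i j] by auto
  finally show "(Uh n * DFT n) $$ (i,j) = 1\<^sub>m n $$ (i,j)" .
qed auto

lemma U_Uh: "DFT n * Uh n = 1\<^sub>m n"
proof (rule eq_matI)
  fix i j assume i: "i < dim_row (1\<^sub>m n :: complex mat)" and j: "j < dim_col (1\<^sub>m n :: complex mat)"
  then have i: "i < n" and j: "j < n" by auto
  have "(DFT n * Uh n) $$ (i,j) = (\<Sum>k\<in>{0..<n}. cnj (DFT n $$ (k,j)) * DFT n $$ (k,i))"
    using i j by (simp add: scalar_prod_def Uh_idx DFT_sym mult.commute)
  also have "\<dots> = (\<Sum>k\<in>{0..<n}. cis (2 * pi * real k * of_int (int j - int i) / real n)) / of_nat n"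
    by (simp add: DFT_prod i j sum_divide_distrib)
  also have "\<dots> = 1\<^sub>m n $$ (i,j)" using i j orth_sum[of n "int j - int i"] dvd_diff_iff[OF j i] by auto
  finally show "(DFT n * Uh n) $$ (i,j) = 1\<^sub>m n $$ (i,j)" .
qed auto

lemma mat_inv_eq:
  fixes M M' :: "'a :: field mat"
  assumes M: "M \<in> carrier_mat n n" and M': "M' \<in> carrier_mat n n"
    and "M * M' = 1\<^sub>m n" "M' * M = 1\<^sub>m n"
  shows "mat_inv M = M'"
  unfolding mat_inv_def
proof (rule the_equality)
  show "M' \<in> carrier_mat (dim_row M) (dim_row M) \<and> M * M' = 1\<^sub>m (dim_row M) \<and> M' * M = 1\<^sub>m (dim_row M)"
    using assms by auto
next
  fix X assume X: "X \<in> carrier_mat (dim_row M) (dim_row M) \<and> M * X = 1\<^sub>m (dim_row M) \<and> X * M = 1\<^sub>m (dim_row M)"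
  then have Xc: "X \<in> carrier_mat n n" and XM: "X * M = 1\<^sub>m n" using M by auto
  have "X = X * (M * M')" using assms Xc by simp
  also have "\<dots> = (X * M) * M'" using assms Xc by (simp add: assoc_mult_mat)
  also have "\<dots> = M'" using XM M' by simp
  finally show "X = M'" .
qed

lemma mat_inv_DFT: "mat_inv (DFT n) = Uh n"
  by (rule mat_inv_eq[of _ n]) (simp_all add: U_Uh Uh_U)


definition circ :: "nat \<Rightarrow> (nat \<Rightarrow> complex) \<Rightarrow> complex mat" where
  "circ n f = Uh n * diag_c n f * DFT n"

lemma circ_carrier[simp]: "circ n f \<in> carrier_mat n n"
  unfolding circ_def by (metis mult_carrier_mat DFT_carrier Uh_carrier diag_c_carrier)
lemma circ_dims[simp]: "dim_row (circ n f) = n" "dim_col (circ n f) = n" by (simp_all add: circ_def)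

lemma mult_diag_right:
  assumes "M \<in> carrier_mat m n" "i < m" "j < n"
  shows "(M * diag_c n f) $$ (i,j) = M $$ (i,j) * f j"
proof -
  have "(M * diag_c n f) $$ (i,j) = (\<Sum>l\<in>{0..<n}. M $$ (i,l) * (if l = j then f l else 0))"
    using assms by (simp add: scalar_prod_def diag_c_def)
  also have "\<dots> = (\<Sum>l\<in>{0..<n}. if l = j then M $$ (i,l) * f l else 0)"
    by (rule sum.cong) auto
  finally show ?thesis using assms by simp
qed

lemma diag_mult_diag: "diag_c n f * diag_c n g = diag_c n (\<lambda>k. f k * g k)"
proof (rule eq_matI)
  fix i j assume "i < dim_row (diag_c n (\<lambda>k. f k * g k))" "j < dim_col (diag_c n (\<lambda>k. f k * g k))"
  then have i: "i < n" and j: "j < n" by auto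
  show "(diag_c n f * diag_c n g) $$ (i, j) = diag_c n (\<lambda>k. f k * g k) $$ (i, j)"
    by (subst mult_diag_right[of _ n n]) (use i j in \<open>auto simp: diag_c_def\<close>)
qed auto

lemma diagU_carrier[simp]: "diag_c n f * DFT n \<in> carrier_mat n n"
  by (metis mult_carrier_mat DFT_carrier diag_c_carrier)
lemma Uhdiag_carrier[simp]: "Uh n * diag_c n f \<in> carrier_mat n n"
  by (metis mult_carrier_mat Uh_carrier diag_c_carrier)

lemma diag_mult_assoc: "X \<in> carrier_mat n m \<Longrightarrow> diag_c n f * (diag_c n g * X) = diag_c n (\<lambda>k. f k * g k) * X"
  by (simp flip: diag_mult_diag add: assoc_mult_mat[of _ n n _ n _ m])

lemma U_Uh_assoc: "X \<in> carrier_mat n m \<Longrightarrow> DFT n * (Uh n * X) = X"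
  by (simp flip: assoc_mult_mat[of _ n n _ n] add: U_Uh)

lemma Uh_U_assoc: "X \<in> carrier_mat n m \<Longrightarrow> Uh n * (DFT n * X) = X"
  by (simp flip: assoc_mult_mat[of _ n n _ n] add: Uh_U)

lemma circ_mult: "circ n f * circ n g = circ n (\<lambda>k. f k * g k)"
proof -
  have "circ n f * circ n g = (Uh n * diag_c n f) * (DFT n * (Uh n * (diag_c n g * DFT n)))"
    unfolding circ_def by (simp add: assoc_mult_mat[of _ n n _ n _ n] mult_carrier_mat[of _ n n])
  also have "DFT n * (Uh n * (diag_c n g * DFT n)) = diag_c n g * DFT n"
    by (rule U_Uh_assoc[of _ n n]) simp
  also have "(Uh n * diag_c n f) * (diag_c n g * DFT n) = Uh n * (diag_c n f * (diag_c n g * DFT n))"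
    by (simp add: assoc_mult_mat[of _ n n _ n _ n] mult_carrier_mat[of _ n n])
  also have "diag_c n f * (diag_c n g * DFT n) = diag_c n (\<lambda>k. f k * g k) * DFT n"
    by (rule diag_mult_assoc[of _ n n]) simp
  finally show ?thesis unfolding circ_def by (simp add: assoc_mult_mat[of _ n n _ n _ n] mult_carrier_mat[of _ n n])
qed

lemma U_circ: "DFT n * circ n f = diag_c n f * DFT n"
proof -
  have "DFT n * circ n f = DFT n * (Uh n * (diag_c n f * DFT n))"
    unfolding circ_def by (simp add: assoc_mult_mat[of _ n n _ n _ n] mult_carrier_mat[of _ n n])
  also have "\<dots> = diag_c n f * DFT n" by (rule U_Uh_assoc[of _ n n]) simp
  finally show ?thesis .
qed

lemma diag_one: "diag_c n (\<lambda>_. 1) = 1\<^sub>m n"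
  by (rule eq_matI) (auto simp: diag_c_def)

lemma circ_one: "circ n (\<lambda>_. 1) = 1\<^sub>m n"
  by (simp add: circ_def diag_one Uh_U)

lemma circ_idx0:
  assumes "i < n" "j < n"
  shows "circ n f $$ (i,j) = (\<Sum>k\<in>{0..<n}. cnj (DFT n $$ (k,i)) * DFT n $$ (k,j) * f k)"
proof -
  have "circ n f $$ (i,j) = (\<Sum>k\<in>{0..<n}. (Uh n * diag_c n f) $$ (i,k) * DFT n $$ (k,j))"
    using assms by (simp add: circ_def scalar_prod_def)
  also have "\<dots> = (\<Sum>k\<in>{0..<n}. cnj (DFT n $$ (k,i)) * DFT n $$ (k,j) * f k)"
  proof (rule sum.cong)
    fix k assume "k \<in> {0..<n}"
    then have k: "k < n" by simp
    show "(Uh n * diag_c n f) $$ (i,k) * DFT n $$ (k,j) = cnj (DFT n $$ (k,i)) * DFT n $$ (k,j) * f k"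
      by (subst mult_diag_right[OF Uh_carrier]) (use assms k in \<open>auto simp: Uh_idx mult_ac\<close>)
  qed simp
  finally show ?thesis .
qed

lemma circ_idx:
  assumes "i < n" "j < n"
  shows "circ n f $$ (i,j) = (\<Sum>k\<in>{0..<n}. f k * cis (2 * pi * real k * of_int (int i - int j) / real n)) / of_nat n"
  unfolding circ_idx0[OF assms] sum_divide_distrib
  by (rule sum.cong) (use assms in \<open>auto simp: DFT_prod\<close>)

lemma circ_add: "circ n f + circ n g = circ n (\<lambda>k. f k + g k)"
  by (rule eq_matI) (auto simp: circ_idx distrib_right sum.distrib add_divide_distrib)

lemma circ_diff: "circ n f - circ n g = circ n (\<lambda>k. f k - g k)"
  by (rule eq_matI) (auto simp: circ_idx left_diff_distrib sum_subtractf diff_divide_distrib)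

lemma circ_smult: "c \<cdot>\<^sub>m circ n f = circ n (\<lambda>k. c * f k)"
  by (rule eq_matI) (auto simp: circ_idx sum_distrib_left mult_ac)

lemma circ_zero: "circ n (\<lambda>_. 0) = 0\<^sub>m n n"
  by (rule eq_matI) (auto simp: circ_idx)

lemma sin_int_minus: "sin (2 * pi * of_int m - y) = - sin y"
proof -
  have "sin (2 * pi * of_int m) = 0" using sin_times_pi_eq_0[of "2 * of_int m"] by (simp add: mult_ac)
  moreover have "cos (2 * pi * of_int m) = 1" using cos_one_2pi_int by (auto simp: mult_ac)
  ultimately show ?thesis by (simp add: sin_diff)
qed

lemma Dhat_sym: "0 < k \<Longrightarrow> k < n \<Longrightarrow> Dhat n (n - k) = Dhat n k"
proof -
  assume k: "0 < k" "k < n"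
  have "pi * real (n - k) / real n = pi - pi * real k / real n" using k by (simp add: of_nat_diff field_simps)
  then show ?thesis by (simp add: Dhat_def sin_pi_minus)
qed

lemma sym_sum_zero:
  "(\<Sum>k\<in>{0..<n}. \<phi> (Dhat n k) * sin (2 * pi * real k * of_int m / real n)) = 0"
proof (cases "n = 0")
  case True then show ?thesis by simp
next
  case False
  define \<sigma> where "\<sigma> k = (n - k) mod n" for k
  define g where "g k = \<phi> (Dhat n k) * sin (2 * pi * real k * of_int m / real n)" for k
  have ss: "\<sigma> (\<sigma> k) = k" if "k < n" for k
  proof (cases "k = 0")
    case True then show ?thesis by (simp add: \<sigma>_def)
  next
    case False then show ?thesis using that by (simp add: \<sigma>_def)
  qed
  have sr: "\<sigma> k < n" for k using \<open>n \<noteq> 0\<close> by (simp add: \<sigma>_def)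
  have bij: "bij_betw \<sigma> {0..<n} {0..<n}"
    by (rule bij_betw_byWitness[where f'=\<sigma>]) (use ss sr in auto)
  have neg: "g (\<sigma> k) = - g k" if "k < n" for k
  proof (cases "k = 0")
    case True then show ?thesis by (simp add: \<sigma>_def g_def)
  next
    case False
    then have sk: "\<sigma> k = n - k" using that by (simp add: \<sigma>_def)
    have "2 * pi * real (n - k) * of_int m / real n = 2 * pi * of_int m - 2 * pi * real k * of_int m / real n"
      using that \<open>n \<noteq> 0\<close> by (simp add: of_nat_diff field_simps)
    then show ?thesis using False that by (simp add: g_def sk Dhat_sym sin_int_minus)
  qed
  have "sum g {0..<n} = sum (\<lambda>k. g (\<sigma> k)) {0..<n}"
    using sum.reindex_bij_betw[OF bij, of g] by simp
  also have "\<dots> = - sum g {0..<n}" by (simp add: neg sum_negf)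
  finally have "sum g {0..<n} = 0" by simp
  then show ?thesis by (simp add: g_def)
qed

definition rf :: "nat \<Rightarrow> (real \<Rightarrow> real) \<Rightarrow> nat \<Rightarrow> complex" where
  "rf n \<phi> k = complex_of_real (\<phi> (Dhat n k))"

definition rc :: "nat \<Rightarrow> (real \<Rightarrow> real) \<Rightarrow> real mat" where
  "rc n \<phi> = map_mat Re (circ n (rf n \<phi>))"

lemma rc_carrier[simp]: "rc n \<phi> \<in> carrier_mat n n" by (simp add: rc_def)
lemma rc_dims[simp]: "dim_row (rc n \<phi>) = n" "dim_col (rc n \<phi>) = n" by (simp_all add: rc_def)

lemma Im_circ_rf:
  assumes "i < n" "j < n"
  shows "Im (circ n (rf n \<phi>) $$ (i,j)) = 0"
proof -
  have "Im (circ n (rf n \<phi>) $$ (i,j)) =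
     (\<Sum>k\<in>{0..<n}. \<phi> (Dhat n k) * sin (2 * pi * real k * of_int (int i - int j) / real n)) / real n"
    using assms by (simp add: circ_idx rf_def Im_divide_of_nat Im_sum del: of_int_diff)
  also have "\<dots> = 0" by (simp only: sym_sum_zero)
  finally show ?thesis .
qed

lemma rc_of_real: "map_mat complex_of_real (rc n \<phi>) = circ n (rf n \<phi>)"
proof (rule eq_matI)
  fix i j assume "i < dim_row (circ n (rf n \<phi>))" "j < dim_col (circ n (rf n \<phi>))"
  then have i: "i < n" and j: "j < n" by auto
  show "map_mat complex_of_real (rc n \<phi>) $$ (i, j) = circ n (rf n \<phi>) $$ (i, j)"
    using Im_circ_rf[OF i j, of \<phi>] i j by (simp add: rc_def complex_eq_iff)
qed auto

lemma rc_idx: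
  assumes "i < n" "j < n"
  shows "rc n \<phi> $$ (i,j) = (\<Sum>k\<in>{0..<n}. \<phi> (Dhat n k) * cos (2 * pi * real k * of_int (int i - int j) / real n)) / real n"
  using assms by (simp add: rc_def circ_idx rf_def Re_divide_of_nat Re_sum del: of_int_diff)

lemma rc_transpose: "transpose_mat (rc n \<phi>) = rc n \<phi>"
proof (rule eq_matI)
  fix i j assume "i < dim_row (rc n \<phi>)" "j < dim_col (rc n \<phi>)"
  then have i: "i < n" and j: "j < n" by auto
  have e: "2 * pi * real k * of_int (int j - int i) / real n = - (2 * pi * real k * of_int (int i - int j) / real n)" for k
    by (cases "n = 0") (simp_all add: field_simps)
  show "transpose_mat (rc n \<phi>) $$ (i, j) = rc n \<phi> $$ (i, j)"
    using i j by (simp add: rc_idx e del: of_int_diff)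
qed auto

lemma rc_eqI: "map_mat complex_of_real A = map_mat complex_of_real B \<Longrightarrow> A = B"
  by (rule of_real_hom.mat_hom_inj)

lemma map_rc_mult: "map_mat complex_of_real (rc n \<phi> * rc n \<psi>) = map_mat complex_of_real (rc n \<phi>) * map_mat complex_of_real (rc n \<psi>)"
  by (rule of_real_hom.mat_hom_mult[of _ n n _ n]) auto

lemma rc_mult: "rc n \<phi> * rc n \<psi> = rc n (\<lambda>x. \<phi> x * \<psi> x)"
proof -
  have "(\<lambda>k. rf n \<phi> k * rf n \<psi> k) = rf n (\<lambda>x. \<phi> x * \<psi> x)" by (simp add: fun_eq_iff rf_def)
  then show ?thesis by (intro rc_eqI) (simp add: map_rc_mult rc_of_real circ_mult)
qed

lemma map_of_real_add: "A \<in> carrier_mat n m \<Longrightarrow> B \<in> carrier_mat n m \<Longrightarrow>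
   map_mat complex_of_real (A + B) = map_mat complex_of_real A + map_mat complex_of_real B"
  by (rule eq_matI) auto
lemma map_of_real_diff: "A \<in> carrier_mat n m \<Longrightarrow> B \<in> carrier_mat n m \<Longrightarrow>
   map_mat complex_of_real (A - B) = map_mat complex_of_real A - map_mat complex_of_real B"
  by (rule eq_matI) auto
lemma map_of_real_smult: "map_mat complex_of_real (c \<cdot>\<^sub>m A) = complex_of_real c \<cdot>\<^sub>m map_mat complex_of_real A"
  by (rule eq_matI) auto

lemma rc_add: "rc n \<phi> + rc n \<psi> = rc n (\<lambda>x. \<phi> x + \<psi> x)"
proof -
  have "(\<lambda>k. rf n \<phi> k + rf n \<psi> k) = rf n (\<lambda>x. \<phi> x + \<psi> x)" by (simp add: fun_eq_iff rf_def)
  then show ?thesis by (intro rc_eqI) (simp add: map_of_real_add[of _ n n] rc_of_real circ_add)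
qed

lemma rc_diff: "rc n \<phi> - rc n \<psi> = rc n (\<lambda>x. \<phi> x - \<psi> x)"
proof -
  have "(\<lambda>k. rf n \<phi> k - rf n \<psi> k) = rf n (\<lambda>x. \<phi> x - \<psi> x)" by (simp add: fun_eq_iff rf_def)
  then show ?thesis by (intro rc_eqI) (simp add: map_of_real_diff[of _ n n] rc_of_real circ_diff)
qed

lemma rc_smult: "c \<cdot>\<^sub>m rc n \<phi> = rc n (\<lambda>x. c * \<phi> x)"
proof -
  have "(\<lambda>k. complex_of_real c * rf n \<phi> k) = rf n (\<lambda>x. c * \<phi> x)" by (simp add: fun_eq_iff rf_def)
  then show ?thesis by (intro rc_eqI) (simp add: map_of_real_smult rc_of_real circ_smult)
qed

lemma rc_one: "rc n (\<lambda>_. 1) = 1\<^sub>m n"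
proof -
  have "rf n (\<lambda>_. 1) = (\<lambda>_. 1)" by (simp add: rf_def fun_eq_iff)
  then show ?thesis by (intro eq_matI) (auto simp: rc_def circ_one)
qed

lemma rc_zero: "rc n (\<lambda>_. 0) = 0\<^sub>m n n"
proof -
  have "rf n (\<lambda>_. 0) = (\<lambda>_. 0)" by (simp add: rf_def fun_eq_iff)
  then show ?thesis by (intro eq_matI) (auto simp: rc_def circ_zero)
qed

lemma rc_cong: "(\<And>x. \<phi> x = \<psi> x) \<Longrightarrow> rc n \<phi> = rc n \<psi>"
  by (metis ext)


lemma mod_succ_iff:
  assumes j: "j < n"
  shows "(j = (i+1) mod n) \<longleftrightarrow> int n dvd (int i - int j + 1)"
proof -
  have "(j = (i+1) mod n) \<longleftrightarrow> (i+1) mod n = j mod n" using j by auto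
  also have "\<dots> \<longleftrightarrow> int (i+1) mod int n = int j mod int n" by (metis of_nat_eq_iff zmod_int)
  also have "\<dots> \<longleftrightarrow> int n dvd (int (i+1) - int j)" by (rule mod_eq_dvd_iff)
  finally show ?thesis by (simp add: algebra_simps)
qed

lemma Dhat_cis: "complex_of_real (Dhat n k) = cis (2*pi*real k/real n) + cis (- (2*pi*real k/real n)) - 2"
proof -
  have "Dhat n k = 2 * cos (2*pi*real k/real n) - 2"
    using cos_double_sin[of "pi * real k / real n"] by (simp add: Dhat_def algebra_simps)
  then show ?thesis by (simp add: complex_eq_iff)
qed

lemma D2_circ:
  assumes n: "n > 0"
  shows "map_mat complex_of_real (D2 n) = circ n (rf n (\<lambda>x. x))"
proof (rule eq_matI)
  fix i j assume "i < dim_row (circ n (rf n (\<lambda>x. x)))" "j < dim_col (circ n (rf n (\<lambda>x. x)))"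
  then have i: "i < n" and j: "j < n" by auto
  define m where "m = int i - int j"
  define e where "e k t = cis (2 * pi * real k * of_int t / real n)" for k t
  have ek: "rf n (\<lambda>x. x) k * cis (2 * pi * real k * of_int m / real n) = e k (m+1) + e k (m-1) - 2 * e k m" for k
  proof -
    have "rf n (\<lambda>x. x) k * cis (2 * pi * real k * of_int m / real n) =
      cis (2*pi*real k/real n) * cis (2 * pi * real k * of_int m / real n)
      + cis (- (2*pi*real k/real n)) * cis (2 * pi * real k * of_int m / real n)
      - 2 * cis (2 * pi * real k * of_int m / real n)"
      by (simp add: rf_def Dhat_cis algebra_simps)
    also have "cis (2*pi*real k/real n) * cis (2 * pi * real k * of_int m / real n) = e k (m+1)"
      unfolding e_def cis_mult using n by (simp add: field_simps)
    also have "cis (- (2*pi*real k/real n)) * cis (2 * pi * real k * of_int m / real n) = e k (m-1)"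
      unfolding e_def cis_mult using n by (simp add: field_simps)
    finally show ?thesis unfolding e_def .
  qed
  have "circ n (rf n (\<lambda>x. x)) $$ (i,j) = (\<Sum>k\<in>{0..<n}. e k (m+1) + e k (m-1) - 2 * e k m) / of_nat n"
    using i j by (simp only: circ_idx m_def[symmetric] ek)
  also have "\<dots> = ((\<Sum>k\<in>{0..<n}. e k (m+1)) + (\<Sum>k\<in>{0..<n}. e k (m-1)) - 2 * (\<Sum>k\<in>{0..<n}. e k m)) / of_nat n"
    by (simp add: sum.distrib sum_subtractf sum_distrib_left)
  also have "\<dots> = ((if int n dvd (m+1) then of_nat n else 0) + (if int n dvd (m-1) then of_nat n else 0)
      - 2 * (if int n dvd m then of_nat n else 0)) / of_nat n"
    unfolding e_def using n by (simp only: orth_sum)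
  also have "\<dots> = complex_of_real (D2 n $$ (i,j))"
  proof -
    have a: "(j = (i+1) mod n) \<longleftrightarrow> int n dvd (m+1)" using mod_succ_iff[OF j, of i] by (simp add: m_def)
    have b: "(i = (j+1) mod n) \<longleftrightarrow> int n dvd (m-1)" using mod_succ_iff[OF i, of j]
      by (metis m_def dvd_minus_iff minus_diff_eq add.commute diff_add_eq diff_diff_eq2 uminus_add_conv_diff)
    have c: "(i = j) \<longleftrightarrow> int n dvd m" using dvd_diff_iff[OF i j] by (simp add: m_def)
    have D: "D2 n $$ (i,j) = (if int n dvd m then -2 else 0) + (if int n dvd (m+1) then 1 else 0) + (if int n dvd (m-1) then 1 else 0)"
      using i j by (simp add: D2_def a[symmetric] b[symmetric] c[symmetric])
    show ?thesis unfolding D using n by (simp split: if_split)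
  qed
  finally show "map_mat complex_of_real (D2 n) $$ (i, j) = circ n (rf n (\<lambda>x. x)) $$ (i, j)"
    using i j by (simp add: D2_def)
qed (auto simp: D2_def)

lemma D2_rc: "n > 0 \<Longrightarrow> D2 n = rc n (\<lambda>x. x)"
  by (rule rc_eqI) (simp add: D2_circ rc_of_real)


lemma minus_four_block_mat: assumes
  c1: "A1 \<in> carrier_mat nr1 nc1" "B1 \<in> carrier_mat nr1 nc2" "C1 \<in> carrier_mat nr2 nc1" "E1 \<in> carrier_mat nr2 nc2" and
  c2: "A2 \<in> carrier_mat nr1 nc1" "B2 \<in> carrier_mat nr1 nc2" "C2 \<in> carrier_mat nr2 nc1" "E2 \<in> carrier_mat nr2 nc2"
  shows "four_block_mat A1 B1 C1 E1 - four_block_mat A2 B2 C2 E2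
  = four_block_mat (A1 - A2) (B1 - B2) (C1 - C2) (E1 - E2)"
  by (rule eq_matI, insert assms, auto)

lemma mult4: "A1 \<in> carrier_mat n n \<Longrightarrow> B1 \<in> carrier_mat n n \<Longrightarrow> C1 \<in> carrier_mat n n \<Longrightarrow> E1 \<in> carrier_mat n n \<Longrightarrow>
  A2 \<in> carrier_mat n n \<Longrightarrow> B2 \<in> carrier_mat n n \<Longrightarrow> C2 \<in> carrier_mat n n \<Longrightarrow> E2 \<in> carrier_mat n n \<Longrightarrow>
  four_block_mat A1 B1 C1 E1 * four_block_mat A2 B2 C2 E2
  = four_block_mat (A1 * A2 + B1 * C2) (A1 * B2 + B1 * E2) (C1 * A2 + E1 * C2) (C1 * B2 + E1 * E2)"
  by (rule mult_four_block_mat)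

lemma add4: "A1 \<in> carrier_mat n n \<Longrightarrow> B1 \<in> carrier_mat n n \<Longrightarrow> C1 \<in> carrier_mat n n \<Longrightarrow> E1 \<in> carrier_mat n n \<Longrightarrow>
  A2 \<in> carrier_mat n n \<Longrightarrow> B2 \<in> carrier_mat n n \<Longrightarrow> C2 \<in> carrier_mat n n \<Longrightarrow> E2 \<in> carrier_mat n n \<Longrightarrow>
  four_block_mat A1 B1 C1 E1 + four_block_mat A2 B2 C2 E2
  = four_block_mat (A1 + A2) (B1 + B2) (C1 + C2) (E1 + E2)"
  by (rule add_four_block_mat)

lemma diff4: "A1 \<in> carrier_mat n n \<Longrightarrow> B1 \<in> carrier_mat n n \<Longrightarrow> C1 \<in> carrier_mat n n \<Longrightarrow> E1 \<in> carrier_mat n n \<Longrightarrow>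
  A2 \<in> carrier_mat n n \<Longrightarrow> B2 \<in> carrier_mat n n \<Longrightarrow> C2 \<in> carrier_mat n n \<Longrightarrow> E2 \<in> carrier_mat n n \<Longrightarrow>
  four_block_mat A1 B1 C1 E1 - four_block_mat A2 B2 C2 E2
  = four_block_mat (A1 - A2) (B1 - B2) (C1 - C2) (E1 - E2)"
  by (rule minus_four_block_mat)

lemma rc_const: "rc n (\<lambda>_. c) = c \<cdot>\<^sub>m 1\<^sub>m n"
  using rc_smult[of c n "\<lambda>_. 1"] rc_one[of n] by simp

lemma rc_zeroI: "(\<And>x. f x = 0) \<Longrightarrow> rc n f = 0\<^sub>m n n"
  using rc_cong[of f "\<lambda>_. 0" n] rc_zero by simp

lemma Rinv: assumes "\<Pi>3 > 0" shows "mat_inv (Rmat n \<Pi>3) = rc n (\<lambda>_. \<Pi>3\<^sup>2)"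
  unfolding rc_const Rmat_def
  by (rule mat_inv_eq[of _ n]) (use assms in \<open>auto simp: mult_smult_distrib[of _ n n _ n] mult_smult_assoc_mat[of _ n n _ n]\<close>)

lemma B_blocks: "Bmat n = four_block_mat (0\<^sub>m n n) (0\<^sub>m n 0) (1\<^sub>m n) (0\<^sub>m n 0)"
  by (simp add: Bmat_def append_rows_def)

lemma BT_blocks: "transpose_mat (Bmat n) = four_block_mat (0\<^sub>m n n) (1\<^sub>m n) (0\<^sub>m 0 n) (0\<^sub>m 0 n)"
  unfolding B_blocks by (subst transpose_four_block_mat[of _ n n _ 0 _ n]) auto

lemma sq_block: "A \<in> carrier_mat n n \<Longrightarrow> four_block_mat A (0\<^sub>m n 0) (0\<^sub>m 0 n) (0\<^sub>m 0 0) = A"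
  by (rule eq_matI) auto

lemma G_blocks:
  assumes "\<Pi>3 > 0"
  shows "Bmat n * mat_inv (Rmat n \<Pi>3) * transpose_mat (Bmat n) =
     four_block_mat (0\<^sub>m n n) (0\<^sub>m n n) (0\<^sub>m n n) (rc n (\<lambda>_. \<Pi>3\<^sup>2))"
proof -
  let ?R = "rc n (\<lambda>_. \<Pi>3\<^sup>2)"
  have "Bmat n * mat_inv (Rmat n \<Pi>3) = four_block_mat (0\<^sub>m n n) (0\<^sub>m n 0) (1\<^sub>m n) (0\<^sub>m n 0) *
      four_block_mat ?R (0\<^sub>m n 0) (0\<^sub>m 0 n) (0\<^sub>m 0 0)"
    by (simp add: Rinv[OF assms] B_blocks sq_block)
  also have "\<dots> = four_block_mat (0\<^sub>m n n) (0\<^sub>m n 0) ?R (0\<^sub>m n 0)"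
    by (subst mult_four_block_mat[of _ n n _ 0 _ n _ _ n _ 0]) auto
  finally have 1: "Bmat n * mat_inv (Rmat n \<Pi>3) = four_block_mat (0\<^sub>m n n) (0\<^sub>m n 0) ?R (0\<^sub>m n 0)" .
  show ?thesis unfolding 1 BT_blocks
    by (subst mult_four_block_mat[of _ n n _ 0 _ n _ _ n _ n]) auto
qed

lemma gain_blocks:
  assumes "\<Pi>3 > 0" "P \<in> carrier_mat (n+n) (n+n)"
  shows "lqr_gain (Bmat n) (Rmat n \<Pi>3) P =
     four_block_mat (0\<^sub>m n n) (rc n (\<lambda>_. \<Pi>3\<^sup>2)) (0\<^sub>m 0 n) (0\<^sub>m 0 n) * P"
proof -
  let ?R = "rc n (\<lambda>_. \<Pi>3\<^sup>2)"
  have "mat_inv (Rmat n \<Pi>3) * transpose_mat (Bmat n) = four_block_mat ?R (0\<^sub>m n 0) (0\<^sub>m 0 n) (0\<^sub>m 0 0) *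
      four_block_mat (0\<^sub>m n n) (1\<^sub>m n) (0\<^sub>m 0 n) (0\<^sub>m 0 n)"
    by (simp add: Rinv[OF assms(1)] BT_blocks sq_block)
  also have "\<dots> = four_block_mat (0\<^sub>m n n) ?R (0\<^sub>m 0 n) (0\<^sub>m 0 n)"
    by (subst mult_four_block_mat[of _ n n _ 0 _ 0 _ _ n _ n]) auto
  finally show ?thesis unfolding lqr_gain_def by simp
qed

lemma A_blocks: "n > 0 \<Longrightarrow> Amat n = four_block_mat (0\<^sub>m n n) (1\<^sub>m n) (rc n (\<lambda>x. x)) (0\<^sub>m n n)"
  by (simp add: Amat_def D2_rc)

lemma AT_blocks: "n > 0 \<Longrightarrow> transpose_mat (Amat n) = four_block_mat (0\<^sub>m n n) (rc n (\<lambda>x. x)) (1\<^sub>m n) (0\<^sub>m n n)"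
  unfolding A_blocks by (subst transpose_four_block_mat[of _ n n _ n _ n]) (auto simp: rc_transpose)

lemma Q_blocks: "Qmat n \<Pi>2 = four_block_mat (rc n (\<lambda>_. 1)) (0\<^sub>m n n) (0\<^sub>m n n) (rc n (\<lambda>_. \<Pi>2))"
  unfolding Qmat_def rc_one rc_const[of n \<Pi>2] ..


definition k1f :: "real \<Rightarrow> real \<Rightarrow> real" where "k1f c x = x + sqrt (x\<^sup>2 + c)"
definition k2f :: "real \<Rightarrow> real \<Rightarrow> real \<Rightarrow> real" where "k2f p c x = sqrt (2 * k1f c x + p * c)"

definition P0 :: "nat \<Rightarrow> real \<Rightarrow> real \<Rightarrow> real mat" where
  "P0 n p c = four_block_mat (rc n (\<lambda>x. k2f p c x * (k1f c x - x) / c)) (rc n (\<lambda>x. k1f c x / c))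
                              (rc n (\<lambda>x. k1f c x / c)) (rc n (\<lambda>x. k2f p c x / c))"

lemma P0_carrier[simp]: "P0 n p c \<in> carrier_mat (n+n) (n+n)" by (simp add: P0_def)

lemma k1_pos: "c > 0 \<Longrightarrow> k1f c x > 0"
proof -
  assume c: "c > 0"
  have "sqrt (x\<^sup>2) < sqrt (x\<^sup>2 + c)" using c by (intro real_sqrt_less_mono) simp
  then have "\<bar>x\<bar> < sqrt (x\<^sup>2 + c)" by simp
  then show ?thesis unfolding k1f_def by linarith
qed

lemma k1_sq: "c > 0 \<Longrightarrow> (k1f c x)\<^sup>2 = 2 * x * k1f c x + c"
proof -
  assume c: "c > 0"
  have "(sqrt (x\<^sup>2 + c))\<^sup>2 = x\<^sup>2 + c" using c by (intro real_sqrt_pow2) (simp add: add_nonneg_pos)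
  then show ?thesis unfolding k1f_def by (simp add: power2_eq_square algebra_simps)
qed

lemma k2_pos: "c > 0 \<Longrightarrow> p > 0 \<Longrightarrow> k2f p c x > 0"
  unfolding k2f_def using k1_pos[of c x] by (intro real_sqrt_gt_zero) (simp add: add_pos_pos)

lemma k2_sq: "c > 0 \<Longrightarrow> p > 0 \<Longrightarrow> (k2f p c x)\<^sup>2 = 2 * k1f c x + p * c"
  unfolding k2f_def using k1_pos[of c x] by (intro real_sqrt_pow2) (simp add: add_nonneg_nonneg)

lemma k1_sq': "c > 0 \<Longrightarrow> k1f c x * k1f c x = 2 * x * k1f c x + c"
  using k1_sq[of c x] by (simp add: power2_eq_square)
lemma k2_sq': "c > 0 \<Longrightarrow> p > 0 \<Longrightarrow> k2f p c x * k2f p c x = 2 * k1f c x + p * c"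
  using k2_sq[of c p x] by (simp add: power2_eq_square)

lemma ARE_P0:
  assumes n: "n > 0" and p: "\<Pi>2 > 0" and q: "\<Pi>3 > 0"
  shows "P0 n \<Pi>2 (\<Pi>3\<^sup>2) * four_block_mat (0\<^sub>m n n) (1\<^sub>m n) (rc n (\<lambda>x. x)) (0\<^sub>m n n)
   + four_block_mat (0\<^sub>m n n) (rc n (\<lambda>x. x)) (1\<^sub>m n) (0\<^sub>m n n) * P0 n \<Pi>2 (\<Pi>3\<^sup>2)
   - P0 n \<Pi>2 (\<Pi>3\<^sup>2) * four_block_mat (0\<^sub>m n n) (0\<^sub>m n n) (0\<^sub>m n n) (rc n (\<lambda>_. \<Pi>3\<^sup>2)) * P0 n \<Pi>2 (\<Pi>3\<^sup>2)
   + four_block_mat (rc n (\<lambda>_. 1)) (0\<^sub>m n n) (0\<^sub>m n n) (rc n (\<lambda>_. \<Pi>2)) = 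
   four_block_mat (0\<^sub>m n n) (0\<^sub>m n n) (0\<^sub>m n n) (0\<^sub>m n n)"
  unfolding P0_def
  apply (simp add: mult4[of _ n] add4[of _ n] diff4[of _ n] rc_mult rc_add rc_diff)
  apply (subst four_block_zero_mat[symmetric, of n n n n])
  apply (rule cong_four_block_mat; rule rc_zeroI)
  using q apply (simp_all add: field_simps)
  using p q by (simp_all add: k1_sq' k2_sq' algebra_simps)

lemma GP0:
  assumes n: "n > 0" and p: "\<Pi>2 > 0" and q: "\<Pi>3 > 0"
  shows "four_block_mat (0\<^sub>m n n) (0\<^sub>m n n) (0\<^sub>m n n) (rc n (\<lambda>_. \<Pi>3\<^sup>2)) * P0 n \<Pi>2 (\<Pi>3\<^sup>2)
    = four_block_mat (0\<^sub>m n n) (0\<^sub>m n n) (rc n (k1f (\<Pi>3\<^sup>2))) (rc n (k2f \<Pi>2 (\<Pi>3\<^sup>2)))"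
  unfolding P0_def using q
  by (simp add: mult4[of _ n] rc_mult)

lemma gainP0:
  assumes n: "n > 0" and p: "\<Pi>2 > 0" and q: "\<Pi>3 > 0"
  shows "four_block_mat (0\<^sub>m n n) (rc n (\<lambda>_. \<Pi>3\<^sup>2)) (0\<^sub>m 0 n) (0\<^sub>m 0 n) * P0 n \<Pi>2 (\<Pi>3\<^sup>2)
    = four_block_mat (rc n (k1f (\<Pi>3\<^sup>2))) (rc n (k2f \<Pi>2 (\<Pi>3\<^sup>2))) (0\<^sub>m 0 n) (0\<^sub>m 0 n)"
  unfolding P0_def using q
  by (subst mult_four_block_mat[of _ n n _ n _ 0 _ _ n _ n]) (simp_all add: rc_mult)


lemma eigenvalue_transpose:
  fixes M :: "complex mat"
  assumes "M \<in> carrier_mat m m"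
  shows "eigenvalue (transpose_mat M) z \<longleftrightarrow> eigenvalue M z"
  using assms by (simp add: eigenvalue_root_char_poly[of _ m])

lemma sylvester_zero:
  fixes X M N :: "complex mat"
  assumes X: "X \<in> carrier_mat m m" and M: "M \<in> carrier_mat m m" and N: "N \<in> carrier_mat m m"
    and eq: "X * M + N * X = 0\<^sub>m m m"
    and hM: "\<And>z. eigenvalue M z \<Longrightarrow> Re z < 0"
    and hN: "\<And>z. eigenvalue N z \<Longrightarrow> Re z < 0"
  shows "X = 0\<^sub>m m m"
proof -
  obtain es where cp: "char_poly M = (\<Prod>a\<leftarrow>es. [:- a, 1:])" using char_poly_factorized[OF M] by blast
  obtain T S S' where sd: "schur_decomposition M es = (T, S, S')" by (cases "schur_decomposition M es") auto
  from schur_decomposition[OF M cp sd]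
  have sim: "similar_mat_wit M T S S'" and ut: "upper_triangular T" and dg: "diag_mat T = es" by auto
  from sim M have T: "T \<in> carrier_mat m m" and S: "S \<in> carrier_mat m m" and S': "S' \<in> carrier_mat m m"
    and SS': "S * S' = 1\<^sub>m m" and S'S: "S' * S = 1\<^sub>m m" and MT: "M = S * T * S'"
    unfolding similar_mat_wit_def Let_def by auto
  have diag_ev: "Re (T $$ (j,j)) < 0" if j: "j < m" for j
  proof -
    have "T $$ (j,j) \<in> set es" using dg j T unfolding diag_mat_def by auto
    then have "poly (char_poly M) (T $$ (j,j)) = 0"
      unfolding cp poly_prod_list by (auto simp: prod_list_zero_iff)
    then have "eigenvalue M (T $$ (j,j))" using eigenvalue_root_char_poly[OF M] by simp
    then show ?thesis by (rule hM)
  qed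
  define Y where "Y = X * S"
  have Y: "Y \<in> carrier_mat m m" unfolding Y_def using X S by simp
  have MS: "M * S = S * T"
  proof -
    have "M * S = S * T * (S' * S)" unfolding MT using S T S' by (simp add: assoc_mult_mat[of _ m m _ m _ m])
    then show ?thesis using S'S S T by simp
  qed
  have YT: "Y * T + N * Y = 0\<^sub>m m m"
  proof -
    have "Y * T = X * M * S" unfolding Y_def using X S T M by (simp add: MS assoc_mult_mat[of _ m m _ m _ m])
    moreover have "N * Y = N * X * S" unfolding Y_def using X S N by (simp add: assoc_mult_mat[of _ m m _ m _ m])
    ultimately have "Y * T + N * Y = (X * M + N * X) * S"
      using X S N M by (simp add: add_mult_distrib_mat[of _ m m _ _ m])
    then show ?thesis using eq S by simp
  qed
  have colz: "\<forall>i<m. Y $$ (i,j) = 0" if "j < m" for j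
    using that
  proof (induction j rule: less_induct)
    case (less j)
    define y where "y = col Y j"
    have y: "y \<in> carrier_vec m" using Y unfolding y_def carrier_mat_def carrier_vec_def by simp
    have ent: "(N *\<^sub>v y) $ i = (- T $$ (j,j)) * y $ i" if i: "i < m" for i
    proof -
      have "(Y * T) $$ (i,j) + (N * Y) $$ (i,j) = 0"
        using arg_cong[OF YT, of "\<lambda>A. A $$ (i,j)"] i less.prems Y T N by simp
      moreover have "(N * Y) $$ (i,j) = (N *\<^sub>v y) $ i" unfolding y_def using i less.prems Y N by simp
      moreover have "(Y * T) $$ (i,j) = Y $$ (i,j) * T $$ (j,j)"
      proof -
        have "(Y * T) $$ (i,j) = (\<Sum>l\<in>{0..<m}. Y $$ (i,l) * T $$ (l,j))"
          using i less.prems Y T by (simp add: scalar_prod_def)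
        also have "\<dots> = (\<Sum>l\<in>{0..<m}. if l = j then Y $$ (i,l) * T $$ (l,j) else 0)"
        proof (rule sum.cong)
          fix l assume l: "l \<in> {0..<m}"
          show "Y $$ (i,l) * T $$ (l,j) = (if l = j then Y $$ (i,l) * T $$ (l,j) else 0)"
          proof (cases "l < j")
            case True then show ?thesis using less.IH[of l] less.prems i by auto
          next
            case False
            then show ?thesis using ut l T unfolding upper_triangular_def by auto
          qed
        qed simp
        finally show ?thesis using less.prems by simp
      qed
      ultimately have "(N *\<^sub>v y) $ i + T $$ (j,j) * y $ i = 0" unfolding y_def using i less.prems Y by (simp add: algebra_simps)
      then show ?thesis by (simp add: eq_neg_iff_add_eq_0)
    qed
    have Ny: "N *\<^sub>v y = (- T $$ (j,j)) \<cdot>\<^sub>v y"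
      by (rule eq_vecI) (use ent y N in auto)
    show ?case
    proof (rule ccontr)
      assume "\<not> (\<forall>i<m. Y $$ (i,j) = 0)"
      then have "y \<noteq> 0\<^sub>v m" unfolding y_def using Y less.prems by (auto simp: vec_eq_iff)
      then have "eigenvalue N (- T $$ (j,j))" unfolding eigenvalue_def eigenvector_def
        using y N Ny by auto
      then have "Re (- T $$ (j,j)) < 0" by (rule hN)
      with diag_ev[OF less.prems] show False by simp
    qed
  qed
  have Y0: "Y = 0\<^sub>m m m" by (rule eq_matI) (use colz Y in auto)
  have "X = Y * S'" unfolding Y_def using X S S' SS' by (simp add: assoc_mult_mat[of _ m m _ m _ m])
  then show ?thesis using Y0 S' by simp
qed

lemma are_diff:
  fixes A G P1 P2 Q :: "real mat"
  assumes c: "A \<in> carrier_mat m m" "G \<in> carrier_mat m m" "P1 \<in> carrier_mat m m" "P2 \<in> carrier_mat m m" "Q \<in> carrier_mat m m"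
    and sG: "transpose_mat G = G" and sP: "transpose_mat P2 = P2"
    and e1: "P1 * A + transpose_mat A * P1 - P1 * G * P1 + Q = 0\<^sub>m m m"
    and e2: "P2 * A + transpose_mat A * P2 - P2 * G * P2 + Q = 0\<^sub>m m m"
  shows "(P1 - P2) * (A - G * P1) + transpose_mat (A - G * P2) * (P1 - P2) = 0\<^sub>m m m"
proof -
  have t: "transpose_mat (A - G * P2) = transpose_mat A - P2 * G"
    using c by (simp add: transpose_minus[of _ m m] transpose_mult[of _ m m] sG sP)
  have d1: "(P1 - P2) * (A - G * P1) = P1 * A - P2 * A - (P1 * (G * P1) - P2 * (G * P1))"
    using c by (simp add: minus_mult_distrib_mat[of _ m m _ _ m] mult_minus_distrib_mat[of _ m m _ m] minus_carrier_mat[of _ m m] mult_carrier_mat[of _ m m] assoc_mult_mat[of _ m m _ m _ m])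
  have d2: "(transpose_mat A - P2 * G) * (P1 - P2) = transpose_mat A * P1 - P2 * (G * P1) - (transpose_mat A * P2 - P2 * (G * P2))"
    using c by (simp add: minus_mult_distrib_mat[of _ m m _ _ m] mult_minus_distrib_mat[of _ m m _ m] minus_carrier_mat[of _ m m] mult_carrier_mat[of _ m m] assoc_mult_mat[of _ m m _ m _ m])
  show ?thesis unfolding t d1 d2
  proof (rule eq_matI)
    fix i j assume ij: "i < dim_row (0\<^sub>m m m :: real mat)" "j < dim_col (0\<^sub>m m m :: real mat)"
    then have i: "i < m" and j: "j < m" by auto
    have e1': "P1 * A + transpose_mat A * P1 - P1 * (G * P1) + Q = 0\<^sub>m m m"
      using e1 c by (simp add: assoc_mult_mat[of _ m m _ m _ m])
    have e2': "P2 * A + transpose_mat A * P2 - P2 * (G * P2) + Q = 0\<^sub>m m m"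
      using e2 c by (simp add: assoc_mult_mat[of _ m m _ m _ m])
    have x1: "(P1*A)$$(i,j) + (transpose_mat A * P1)$$(i,j) - (P1*(G*P1))$$(i,j) + Q$$(i,j) = 0"
      using arg_cong[OF e1', of "\<lambda>M. M $$ (i,j)"] i j c by (simp del: index_mult_mat(1))
    have x2: "(P2*A)$$(i,j) + (transpose_mat A * P2)$$(i,j) - (P2*(G*P2))$$(i,j) + Q$$(i,j) = 0"
      using arg_cong[OF e2', of "\<lambda>M. M $$ (i,j)"] i j c by (simp del: index_mult_mat(1))
    show "(P1 * A - P2 * A - (P1 * (G * P1) - P2 * (G * P1)) +
          (transpose_mat A * P1 - P2 * (G * P1) - (transpose_mat A * P2 - P2 * (G * P2)))) $$ (i, j) =
          0\<^sub>m m m $$ (i, j)"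
      using i j c x1 x2 by (simp del: index_mult_mat(1))
  qed (use c in auto)
qed


lemma quad_re_neg:
  fixes z :: complex and b c :: real
  assumes b: "b > 0" and c: "c > 0" and eq: "z * z + of_real b * z + of_real c = 0"
  shows "Re z < 0"
proof -
  have re: "Re z * Re z - Im z * Im z + b * Re z + c = 0" using arg_cong[OF eq, of Re] by simp
  have im: "2 * Re z * Im z + b * Im z = 0" using arg_cong[OF eq, of Im] by (simp add: algebra_simps)
  show ?thesis
  proof (cases "Im z = 0")
    case True
    then have "Re z * Re z + b * Re z + c = 0" using re by simp
    then show ?thesis using b c
      by (smt (verit, best) mult_nonneg_nonneg)
  next
    case False
    then have "2 * Re z + b = 0" using im by (metis distrib_right mult_eq_0_iff)
    then show ?thesis using b by linarith
  qed
qed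

lemma circ_vec_carrier[simp]: "a \<in> carrier_vec n \<Longrightarrow> circ n f *\<^sub>v a \<in> carrier_vec n"
  by (rule mult_mat_vec_carrier[OF circ_carrier])
lemma DFT_vec_carrier[simp]: "a \<in> carrier_vec n \<Longrightarrow> DFT n *\<^sub>v a \<in> carrier_vec n"
  by (rule mult_mat_vec_carrier[OF DFT_carrier])

lemma mat_vec_zero: fixes A :: "complex mat" assumes A: "A \<in> carrier_mat n m" shows "A *\<^sub>v 0\<^sub>v m = 0\<^sub>v n"
proof (rule eq_vecI)
  fix i assume "i < dim_vec (0\<^sub>v n :: complex vec)"
  then have i: "i < n" by simp
  have r: "row A i \<in> carrier_vec m" using row_carrier_vec[OF i A] .
  have "(A *\<^sub>v 0\<^sub>v m) $ i = row A i \<bullet> 0\<^sub>v m" using i A by (subst index_mult_mat_vec) auto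
  also have "\<dots> = 0" using r by (rule scalar_prod_right_zero)
  finally show "(A *\<^sub>v 0\<^sub>v m) $ i = (0\<^sub>v n :: complex vec) $ i" using i by simp
next
  show "dim_vec (A *\<^sub>v 0\<^sub>v m) = dim_vec (0\<^sub>v n :: complex vec)" using A by simp
qed
lemma zero_mat_vec: fixes a :: "complex vec" assumes a: "a \<in> carrier_vec m" shows "0\<^sub>m n m *\<^sub>v a = 0\<^sub>v n"
proof (rule eq_vecI)
  fix i assume "i < dim_vec (0\<^sub>v n :: complex vec)"
  then have i: "i < n" by simp
  have "(0\<^sub>m n m *\<^sub>v a) $ i = row (0\<^sub>m n m) i \<bullet> a" using i by (subst index_mult_mat_vec) auto
  also have "row (0\<^sub>m n m) i = 0\<^sub>v m" using i by (rule row_zero)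
  also have "0\<^sub>v m \<bullet> a = 0" using a by (rule scalar_prod_left_zero)
  finally show "(0\<^sub>m n m *\<^sub>v a) $ i = (0\<^sub>v n :: complex vec) $ i" using i by simp
qed simp

lemma diag_mult_vec: "w \<in> carrier_vec n \<Longrightarrow> k < n \<Longrightarrow> (diag_c n f *\<^sub>v w) $ k = f k * w $ k"
proof -
  assume w: "w \<in> carrier_vec n" and k: "k < n"
  have "(diag_c n f *\<^sub>v w) $ k = (\<Sum>l\<in>{0..<n}. (if k = l then f k else 0) * w $ l)"
    using w k by (simp add: scalar_prod_def diag_c_def)
  also have "\<dots> = (\<Sum>l\<in>{0..<n}. if l = k then f k * w $ k else 0)" by (rule sum.cong) auto
  finally show ?thesis using k by simp
qed

lemma U_circ_vec: "a \<in> carrier_vec n \<Longrightarrow> DFT n *\<^sub>v (circ n f *\<^sub>v a) = diag_c n f *\<^sub>v (DFT n *\<^sub>v a)"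
proof -
  assume a: "a \<in> carrier_vec n"
  have "DFT n *\<^sub>v (circ n f *\<^sub>v a) = (DFT n * circ n f) *\<^sub>v a" using a by (simp add: assoc_mult_mat_vec[of _ n n _ n])
  also have "\<dots> = (diag_c n f * DFT n) *\<^sub>v a" by (simp add: U_circ)
  also have "\<dots> = diag_c n f *\<^sub>v (DFT n *\<^sub>v a)" using a by (rule assoc_mult_mat_vec[of "diag_c n f" n n "DFT n" n a, rotated 2]) auto
  finally show ?thesis .
qed

lemma U_inj_vec: "a \<in> carrier_vec n \<Longrightarrow> DFT n *\<^sub>v a = 0\<^sub>v n \<Longrightarrow> a = 0\<^sub>v n"
proof -
  assume a: "a \<in> carrier_vec n" and "DFT n *\<^sub>v a = 0\<^sub>v n"
  then have "Uh n *\<^sub>v (DFT n *\<^sub>v a) = 0\<^sub>v n" by (simp add: mat_vec_zero[of _ n n])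
  moreover have "Uh n *\<^sub>v (DFT n *\<^sub>v a) = a"
    using a assoc_mult_mat_vec[of "Uh n" n n "DFT n" n a] by (simp add: Uh_U)
  ultimately show ?thesis by simp
qed

lemma hurwitz_block:
  fixes f g :: "nat \<Rightarrow> complex"
  assumes roots: "\<And>k z. k < n \<Longrightarrow> z * z - g k * z - f k = 0 \<Longrightarrow> Re z < 0"
    and ev: "eigenvalue (four_block_mat (0\<^sub>m n n) (1\<^sub>m n) (circ n f) (circ n g)) z"
  shows "Re z < 0"
proof -
  let ?M = "four_block_mat (0\<^sub>m n n) (1\<^sub>m n) (circ n f) (circ n g)"
  obtain v where v: "v \<in> carrier_vec (n+n)" and v0: "v \<noteq> 0\<^sub>v (n+n)" and Mv: "?M *\<^sub>v v = z \<cdot>\<^sub>v v"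
    using ev unfolding eigenvalue_def eigenvector_def by auto
  define a where "a = vec_first v n"
  define b where "b = vec_last v n"
  have a: "a \<in> carrier_vec n" and b: "b \<in> carrier_vec n" unfolding a_def b_def by auto
  have vab: "v = a @\<^sub>v b" unfolding a_def b_def using v by simp
  have "?M *\<^sub>v v = (0\<^sub>m n n *\<^sub>v a + 1\<^sub>m n *\<^sub>v b) @\<^sub>v (circ n f *\<^sub>v a + circ n g *\<^sub>v b)"
    unfolding vab by (rule four_block_mat_mult_vec[of _ n n _ n _ n _ a b]) (use a b in auto)
  also have "0\<^sub>m n n *\<^sub>v a + 1\<^sub>m n *\<^sub>v b = b"
    unfolding zero_mat_vec[OF a] one_mult_mat_vec[OF b] using b by (rule left_zero_vec)
  finally have 1: "?M *\<^sub>v v = b @\<^sub>v (circ n f *\<^sub>v a + circ n g *\<^sub>v b)" .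
  have 2: "z \<cdot>\<^sub>v v = (z \<cdot>\<^sub>v a) @\<^sub>v (z \<cdot>\<^sub>v b)" unfolding vab by (rule eq_vecI) (use a b in auto)
  from Mv 1 2 have eqapp: "b @\<^sub>v (circ n f *\<^sub>v a + circ n g *\<^sub>v b) = (z \<cdot>\<^sub>v a) @\<^sub>v (z \<cdot>\<^sub>v b)" by simp
  have za: "z \<cdot>\<^sub>v a \<in> carrier_vec n" using a by simp
  from eqapp have "b = z \<cdot>\<^sub>v a \<and> circ n f *\<^sub>v a + circ n g *\<^sub>v b = z \<cdot>\<^sub>v b"
    unfolding append_vec_eq[OF b za] .
  then have ba: "b = z \<cdot>\<^sub>v a" and eq2: "circ n f *\<^sub>v a + circ n g *\<^sub>v b = z \<cdot>\<^sub>v b" by auto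
  have a0: "a \<noteq> 0\<^sub>v n"
  proof
    assume "a = 0\<^sub>v n"
    then have b0: "b = 0\<^sub>v n" unfolding ba by (intro eq_vecI) auto
    have "v = 0\<^sub>v (n+n)" unfolding vab b0 \<open>a = 0\<^sub>v n\<close> by (rule eq_vecI) auto
    then show False using v0 by simp
  qed
  define w where "w = DFT n *\<^sub>v a"
  have w: "w \<in> carrier_vec n" unfolding w_def using mult_mat_vec_carrier[OF DFT_carrier a] .
  have "w \<noteq> 0\<^sub>v n" using U_inj_vec[OF a] a0 unfolding w_def by auto
  then obtain k where k: "k < n" and wk: "w $ k \<noteq> 0" using w by (auto simp: vec_eq_iff)
  have Ub: "DFT n *\<^sub>v b = z \<cdot>\<^sub>v w" unfolding ba w_def using a by (rule mult_mat_vec[of _ n n, OF DFT_carrier])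
  have "DFT n *\<^sub>v (circ n f *\<^sub>v a + circ n g *\<^sub>v b) = DFT n *\<^sub>v (circ n f *\<^sub>v a) + DFT n *\<^sub>v (circ n g *\<^sub>v b)"
    by (rule mult_add_distrib_mat_vec[of _ n n]) (use a b in auto)
  also have "\<dots> = diag_c n f *\<^sub>v w + diag_c n g *\<^sub>v (z \<cdot>\<^sub>v w)"
    unfolding w_def U_circ_vec[OF a] U_circ_vec[OF b] Ub[unfolded w_def] ..
  finally have L: "DFT n *\<^sub>v (circ n f *\<^sub>v a + circ n g *\<^sub>v b) = diag_c n f *\<^sub>v w + diag_c n g *\<^sub>v (z \<cdot>\<^sub>v w)" .
  have R: "DFT n *\<^sub>v (z \<cdot>\<^sub>v b) = z \<cdot>\<^sub>v (z \<cdot>\<^sub>v w)"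
    using mult_mat_vec[of "DFT n" n n b z] b unfolding Ub by simp
  have "(diag_c n f *\<^sub>v w + diag_c n g *\<^sub>v (z \<cdot>\<^sub>v w)) $ k = (z \<cdot>\<^sub>v (z \<cdot>\<^sub>v w)) $ k"
  proof -
    have "DFT n *\<^sub>v (circ n f *\<^sub>v a + circ n g *\<^sub>v b) = DFT n *\<^sub>v (z \<cdot>\<^sub>v b)" using eq2 by (rule arg_cong)
    then show ?thesis unfolding L R by (rule arg_cong)
  qed
  moreover have "(diag_c n f *\<^sub>v w + diag_c n g *\<^sub>v (z \<cdot>\<^sub>v w)) $ k = f k * w $ k + g k * (z * w $ k)"
  proof -
    have zw: "z \<cdot>\<^sub>v w \<in> carrier_vec n" using w by simp
    have "(diag_c n f *\<^sub>v w + diag_c n g *\<^sub>v (z \<cdot>\<^sub>v w)) $ k = (diag_c n f *\<^sub>v w) $ k + (diag_c n g *\<^sub>v (z \<cdot>\<^sub>v w)) $ k"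
      by (rule index_add_vec) (use k in simp)
    also have "\<dots> = f k * w $ k + g k * (z \<cdot>\<^sub>v w) $ k" using diag_mult_vec[OF w k] diag_mult_vec[OF zw k] by simp
    also have "(z \<cdot>\<^sub>v w) $ k = z * w $ k" using k w by simp
    finally show ?thesis .
  qed
  moreover have "(z \<cdot>\<^sub>v (z \<cdot>\<^sub>v w)) $ k = z * (z * w $ k)" using k w by simp
  ultimately have "f k * w $ k + g k * (z * w $ k) = z * (z * w $ k)" by simp
  then have "(z * z - g k * z - f k) * w $ k = 0" by (simp add: algebra_simps)
  then have "z * z - g k * z - f k = 0" using wk by simp
  then show ?thesis using roots k by blast
qed


lemma Uh_vec_idx: "w \<in> carrier_vec n \<Longrightarrow> i < n \<Longrightarrow> (Uh n *\<^sub>v w) $ i = (\<Sum>k\<in>{0..<n}. cnj (DFT n $$ (k,i)) * w $ k)"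
proof -
  assume w: "w \<in> carrier_vec n" and i: "i < n"
  have "(Uh n *\<^sub>v w) $ i = row (Uh n) i \<bullet> w" using i by (subst index_mult_mat_vec) auto
  also have "\<dots> = (\<Sum>k\<in>{0..<n}. Uh n $$ (i,k) * w $ k)" using w i by (simp add: scalar_prod_def)
  also have "\<dots> = (\<Sum>k\<in>{0..<n}. cnj (DFT n $$ (k,i)) * w $ k)" using i by (intro sum.cong) (auto simp: Uh_idx)
  finally show ?thesis .
qed

lemma U_vec_idx: "u \<in> carrier_vec n \<Longrightarrow> k < n \<Longrightarrow> (DFT n *\<^sub>v u) $ k = (\<Sum>i\<in>{0..<n}. DFT n $$ (k,i) * u $ i)"
proof -
  assume u: "u \<in> carrier_vec n" and k: "k < n"
  have "(DFT n *\<^sub>v u) $ k = row (DFT n) k \<bullet> u" using k by (subst index_mult_mat_vec) auto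
  also have "\<dots> = (\<Sum>i\<in>{0..<n}. DFT n $$ (k,i) * u $ i)" using u k by (simp add: scalar_prod_def)
  finally show ?thesis .
qed

lemma KQ:
  fixes u v :: "complex vec"
  assumes u: "u \<in> carrier_vec n" and v: "v \<in> carrier_vec n" and ur: "\<And>i. i < n \<Longrightarrow> cnj (u $ i) = u $ i"
  shows "u \<bullet> (circ n f *\<^sub>v v) = (\<Sum>k\<in>{0..<n}. f k * cnj ((DFT n *\<^sub>v u) $ k) * (DFT n *\<^sub>v v) $ k)"
proof -
  define w where "w = diag_c n f *\<^sub>v (DFT n *\<^sub>v v)"
  have w: "w \<in> carrier_vec n" unfolding w_def by (rule mult_mat_vec_carrier[OF diag_c_carrier]) (use v in simp)
  have wk: "w $ k = f k * (DFT n *\<^sub>v v) $ k" if "k < n" for k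
    unfolding w_def using diag_mult_vec[OF _ that] v by simp
  have cv: "circ n f *\<^sub>v v = Uh n *\<^sub>v w"
  proof -
    have "circ n f *\<^sub>v v = (Uh n * diag_c n f) *\<^sub>v (DFT n *\<^sub>v v)"
      unfolding circ_def using assoc_mult_mat_vec[of "Uh n * diag_c n f" n n "DFT n" n v] v by simp
    also have "\<dots> = Uh n *\<^sub>v w" unfolding w_def
      by (rule assoc_mult_mat_vec[of _ n n _ n]) (use v in auto)
    finally show ?thesis .
  qed
  have "u \<bullet> (Uh n *\<^sub>v w) = (\<Sum>i\<in>{0..<n}. u $ i * (Uh n *\<^sub>v w) $ i)"
    using u w by (simp add: scalar_prod_def)
  also have "\<dots> = (\<Sum>i\<in>{0..<n}. \<Sum>k\<in>{0..<n}. u $ i * cnj (DFT n $$ (k,i)) * w $ k)"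
  proof (intro sum.cong refl)
    fix i assume "i \<in> {0..<n}"
    then have i: "i < n" by simp
    show "u $ i * (Uh n *\<^sub>v w) $ i = (\<Sum>k\<in>{0..<n}. u $ i * cnj (DFT n $$ (k,i)) * w $ k)"
      unfolding Uh_vec_idx[OF w i] sum_distrib_left by (simp add: mult_ac)
  qed
  also have "\<dots> = (\<Sum>k\<in>{0..<n}. \<Sum>i\<in>{0..<n}. u $ i * cnj (DFT n $$ (k,i)) * w $ k)"
    by (rule sum.swap)
  also have "\<dots> = (\<Sum>k\<in>{0..<n}. cnj ((DFT n *\<^sub>v u) $ k) * w $ k)"
  proof (intro sum.cong refl)
    fix k assume k: "k \<in> {0..<n}"
    then have k': "k < n" by simp
    have "cnj ((DFT n *\<^sub>v u) $ k) = (\<Sum>i\<in>{0..<n}. cnj (DFT n $$ (k,i)) * cnj (u $ i))"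
      unfolding U_vec_idx[OF u k'] by (simp add: cnj_sum)
    also have "\<dots> = (\<Sum>i\<in>{0..<n}. cnj (DFT n $$ (k,i)) * u $ i)"
      by (intro sum.cong refl) (auto simp: ur)
    finally have cu: "cnj ((DFT n *\<^sub>v u) $ k) = (\<Sum>i\<in>{0..<n}. cnj (DFT n $$ (k,i)) * u $ i)" .
    show "(\<Sum>i\<in>{0..<n}. u $ i * cnj (DFT n $$ (k,i)) * w $ k) = cnj ((DFT n *\<^sub>v u) $ k) * w $ k"
      unfolding cu sum_distrib_right by (intro sum.cong refl) (simp add: mult_ac)
  qed
  also have "\<dots> = (\<Sum>k\<in>{0..<n}. f k * cnj ((DFT n *\<^sub>v u) $ k) * (DFT n *\<^sub>v v) $ k)"
    by (intro sum.cong refl) (simp add: wk mult_ac)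
  finally show ?thesis unfolding cv .
qed

lemma of_real_scalar_prod:
  fixes u v :: "real vec"
  assumes "dim_vec v = dim_vec u"
  shows "complex_of_real (u \<bullet> v) = map_vec complex_of_real u \<bullet> map_vec complex_of_real v"
  using assms by (simp add: scalar_prod_def)

lemma qf_real:
  fixes u v :: "real vec"
  assumes u: "u \<in> carrier_vec n" and v: "v \<in> carrier_vec n"
  shows "u \<bullet> (rc n \<phi> *\<^sub>v v) = Re (\<Sum>k\<in>{0..<n}. rf n \<phi> k * cnj ((DFT n *\<^sub>v map_vec complex_of_real u) $ k)
            * (DFT n *\<^sub>v map_vec complex_of_real v) $ k)"
proof -
  let ?u = "map_vec complex_of_real u" and ?v = "map_vec complex_of_real v"
  have u': "?u \<in> carrier_vec n" and v': "?v \<in> carrier_vec n" using u v by auto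
  have "complex_of_real (u \<bullet> (rc n \<phi> *\<^sub>v v)) = ?u \<bullet> map_vec complex_of_real (rc n \<phi> *\<^sub>v v)"
    by (rule of_real_scalar_prod) (use u in simp)
  also have "map_vec complex_of_real (rc n \<phi> *\<^sub>v v) = map_mat complex_of_real (rc n \<phi>) *\<^sub>v ?v"
    by (rule of_real_hom.mult_mat_vec_hom[OF rc_carrier v])
  also have "\<dots> = circ n (rf n \<phi>) *\<^sub>v ?v" by (simp add: rc_of_real)
  also have "?u \<bullet> (circ n (rf n \<phi>) *\<^sub>v ?v) = (\<Sum>k\<in>{0..<n}. rf n \<phi> k * cnj ((DFT n *\<^sub>v ?u) $ k) * (DFT n *\<^sub>v ?v) $ k)"
    by (rule KQ[OF u' v']) (use u in simp)
  finally show ?thesis by (metis Re_complex_of_real)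
qed


definition Fq :: "real \<Rightarrow> real \<Rightarrow> real \<Rightarrow> real \<Rightarrow> real \<Rightarrow> real" where
  "Fq p1 p2 p3 u v = p1*u*u + 2*p2*u*v + p3*v*v"

lemma Fq_id: "p1 * Fq p1 p2 p3 u v = (p1*u + p2*v)^2 + (p1*p3 - p2*p2) * v^2"
  by (simp add: Fq_def algebra_simps power2_eq_square)

lemma Fq_nonneg: assumes "p1 > 0" "p1 * p3 - p2 * p2 > 0" shows "Fq p1 p2 p3 u v \<ge> 0"
proof -
  have "p1 * Fq p1 p2 p3 u v \<ge> 0" unfolding Fq_id using assms by (intro add_nonneg_nonneg) auto
  then show ?thesis using assms(1) by (simp add: zero_le_mult_iff)
qed

lemma Fq_pos: assumes "p1 > 0" "p1 * p3 - p2 * p2 > 0" "u \<noteq> 0 \<or> v \<noteq> 0" shows "Fq p1 p2 p3 u v > 0"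
proof (cases "v = 0")
  case True
  then have "u \<noteq> 0" using assms by simp
  then have "u * u > 0" by (simp add: zero_less_mult_iff) linarith
  then have "p1 * (u * u) > 0" using assms(1) by (rule mult_pos_pos[rotated])
  then show ?thesis using True by (simp add: Fq_def mult.assoc)
next
  case False
  have "p1 * Fq p1 p2 p3 u v > 0" unfolding Fq_id using assms False
    by (intro add_nonneg_pos) auto
  then show ?thesis using assms(1) by (simp add: zero_less_mult_iff)
qed

lemma Re_T: "Re (complex_of_real r1 * cnj A * A + complex_of_real r2 * cnj A * B + complex_of_real r2 * cnj B * A
    + complex_of_real r3 * cnj B * B) = Fq r1 r2 r3 (Re A) (Re B) + Fq r1 r2 r3 (Im A) (Im B)"
  by (simp add: Fq_def algebra_simps)

lemma P0_coeffs:
  assumes p: "\<Pi>2 > 0" and c: "c > 0"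
  shows "k2f \<Pi>2 c x * (k1f c x - x) / c > 0"
    and "(k2f \<Pi>2 c x * (k1f c x - x) / c) * (k2f \<Pi>2 c x / c) - (k1f c x / c) * (k1f c x / c) > 0"
proof -
  have s: "k1f c x - x > 0" unfolding k1f_def using c by (simp add: add_nonneg_pos)
  have k2: "k2f \<Pi>2 c x > 0" by (rule k2_pos[OF c p])
  show "k2f \<Pi>2 c x * (k1f c x - x) / c > 0" using s k2 c by simp
  have num: "k2f \<Pi>2 c x * k2f \<Pi>2 c x * (k1f c x - x) - k1f c x * k1f c x = c + \<Pi>2 * c * (k1f c x - x)"
  proof -
    have "k2f \<Pi>2 c x * k2f \<Pi>2 c x * (k1f c x - x) - k1f c x * k1f c x = (2 * k1f c x + \<Pi>2 * c) * (k1f c x - x) - k1f c x * k1f c x"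
      unfolding k2_sq'[OF c p] ..
    also have "\<dots> = k1f c x * k1f c x - 2 * x * k1f c x + \<Pi>2 * c * (k1f c x - x)" by (simp add: algebra_simps)
    also have "\<dots> = c + \<Pi>2 * c * (k1f c x - x)" unfolding k1_sq'[OF c] by simp
    finally show ?thesis .
  qed
  have "(k2f \<Pi>2 c x * (k1f c x - x) / c) * (k2f \<Pi>2 c x / c) - (k1f c x / c) * (k1f c x / c)
      = (k2f \<Pi>2 c x * k2f \<Pi>2 c x * (k1f c x - x) - k1f c x * k1f c x) / (c * c)"
    using c by (simp add: field_simps)
  also have "\<dots> = (c + \<Pi>2 * c * (k1f c x - x)) / (c * c)" unfolding num ..
  also have "\<dots> > 0" using c p s by (intro divide_pos_pos add_pos_pos mult_pos_pos) auto
  finally show "(k2f \<Pi>2 c x * (k1f c x - x) / c) * (k2f \<Pi>2 c x / c) - (k1f c x / c) * (k1f c x / c) > 0" .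
qed

lemma rc_vec_carrier[simp]: "a \<in> carrier_vec n \<Longrightarrow> rc n \<phi> *\<^sub>v a \<in> carrier_vec n"
  by (rule mult_mat_vec_carrier[OF rc_carrier])

lemma exists_nonzero_idx:
  fixes w :: "complex vec"
  assumes "w \<in> carrier_vec n" "w \<noteq> 0\<^sub>v n"
  shows "\<exists>k<n. w $ k \<noteq> 0"
proof (rule ccontr)
  assume "\<not> (\<exists>k<n. w $ k \<noteq> 0)"
  then have "w = 0\<^sub>v n" using assms(1) by (intro eq_vecI) auto
  then show False using assms(2) by simp
qed

lemma P0_pd:
  assumes n: "n > 0" and p: "\<Pi>2 > 0" and q: "\<Pi>3 > 0"
  shows "pos_def_mat (P0 n \<Pi>2 (\<Pi>3\<^sup>2))"
  unfolding pos_def_mat_def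
proof (intro ballI impI)
  define c where "c = \<Pi>3\<^sup>2"
  have c: "c > 0" unfolding c_def using q by simp
  define f1 where "f1 = (\<lambda>x. k2f \<Pi>2 c x * (k1f c x - x) / c)"
  define f2 where "f2 = (\<lambda>x. k1f c x / c)"
  define f3 where "f3 = (\<lambda>x. k2f \<Pi>2 c x / c)"
  have P0: "P0 n \<Pi>2 (\<Pi>3\<^sup>2) = four_block_mat (rc n f1) (rc n f2) (rc n f2) (rc n f3)"
    unfolding P0_def f1_def f2_def f3_def c_def ..
  fix x :: "real vec" assume x: "x \<in> carrier_vec (dim_row (P0 n \<Pi>2 (\<Pi>3\<^sup>2)))" and x0: "x \<noteq> 0\<^sub>v (dim_row (P0 n \<Pi>2 (\<Pi>3\<^sup>2)))"
  have xc: "x \<in> carrier_vec (n+n)" using x by (simp add: P0_def)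
  have x0': "x \<noteq> 0\<^sub>v (n+n)" using x0 by (simp add: P0_def)
  define a where "a = vec_first x n"
  define b where "b = vec_last x n"
  have a: "a \<in> carrier_vec n" and b: "b \<in> carrier_vec n" unfolding a_def b_def by auto
  have xab: "x = a @\<^sub>v b" unfolding a_def b_def using xc by simp
  have Px: "P0 n \<Pi>2 (\<Pi>3\<^sup>2) *\<^sub>v x = (rc n f1 *\<^sub>v a + rc n f2 *\<^sub>v b) @\<^sub>v (rc n f2 *\<^sub>v a + rc n f3 *\<^sub>v b)"
    unfolding P0 xab by (rule four_block_mat_mult_vec[of _ n n _ n _ n _ a b]) (use a b in auto)
  have "x \<bullet> (P0 n \<Pi>2 (\<Pi>3\<^sup>2) *\<^sub>v x) = a \<bullet> (rc n f1 *\<^sub>v a + rc n f2 *\<^sub>v b) + b \<bullet> (rc n f2 *\<^sub>v a + rc n f3 *\<^sub>v b)"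
    unfolding Px unfolding xab by (rule scalar_prod_append[of a n b n]) (use a b in auto)
  also have "\<dots> = a \<bullet> (rc n f1 *\<^sub>v a) + a \<bullet> (rc n f2 *\<^sub>v b) + (b \<bullet> (rc n f2 *\<^sub>v a) + b \<bullet> (rc n f3 *\<^sub>v b))"
    using a b by (simp add: scalar_prod_add_distrib[of _ n])
  finally have xPx: "x \<bullet> (P0 n \<Pi>2 (\<Pi>3\<^sup>2) *\<^sub>v x) = a \<bullet> (rc n f1 *\<^sub>v a) + a \<bullet> (rc n f2 *\<^sub>v b) + (b \<bullet> (rc n f2 *\<^sub>v a) + b \<bullet> (rc n f3 *\<^sub>v b))" .
  define A where "A k = (DFT n *\<^sub>v map_vec complex_of_real a) $ k" for k
  define B where "B k = (DFT n *\<^sub>v map_vec complex_of_real b) $ k" for k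
  define d where "d k = Dhat n k" for k
  have "x \<bullet> (P0 n \<Pi>2 (\<Pi>3\<^sup>2) *\<^sub>v x) = Re (\<Sum>k\<in>{0..<n}. rf n f1 k * cnj (A k) * A k)
     + Re (\<Sum>k\<in>{0..<n}. rf n f2 k * cnj (A k) * B k)
     + (Re (\<Sum>k\<in>{0..<n}. rf n f2 k * cnj (B k) * A k) + Re (\<Sum>k\<in>{0..<n}. rf n f3 k * cnj (B k) * B k))"
    unfolding xPx qf_real[OF a a] qf_real[OF a b] qf_real[OF b a] qf_real[OF b b] A_def B_def ..
  also have "\<dots> = Re ((\<Sum>k\<in>{0..<n}. rf n f1 k * cnj (A k) * A k)
     + (\<Sum>k\<in>{0..<n}. rf n f2 k * cnj (A k) * B k)
     + (\<Sum>k\<in>{0..<n}. rf n f2 k * cnj (B k) * A k) + (\<Sum>k\<in>{0..<n}. rf n f3 k * cnj (B k) * B k))"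
    by (simp only: plus_complex.sel add.assoc)
  also have "(\<Sum>k\<in>{0..<n}. rf n f1 k * cnj (A k) * A k)
     + (\<Sum>k\<in>{0..<n}. rf n f2 k * cnj (A k) * B k)
     + (\<Sum>k\<in>{0..<n}. rf n f2 k * cnj (B k) * A k) + (\<Sum>k\<in>{0..<n}. rf n f3 k * cnj (B k) * B k)
     = (\<Sum>k\<in>{0..<n}. rf n f1 k * cnj (A k) * A k + rf n f2 k * cnj (A k) * B k
          + rf n f2 k * cnj (B k) * A k + rf n f3 k * cnj (B k) * B k)"
    by (simp only: sum.distrib)
  also have "Re \<dots> = (\<Sum>k\<in>{0..<n}. Re (rf n f1 k * cnj (A k) * A k + rf n f2 k * cnj (A k) * B k
          + rf n f2 k * cnj (B k) * A k + rf n f3 k * cnj (B k) * B k))"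
    by (rule Re_sum)
  also have "\<dots> = (\<Sum>k\<in>{0..<n}. Fq (f1 (d k)) (f2 (d k)) (f3 (d k)) (Re (A k)) (Re (B k))
       + Fq (f1 (d k)) (f2 (d k)) (f3 (d k)) (Im (A k)) (Im (B k)))"
    unfolding rf_def d_def Re_T ..
  also have "\<dots> > 0"
  proof -
    have pos1: "f1 (d k) > 0" for k unfolding f1_def using P0_coeffs(1)[OF p c] .
    have pos2: "f1 (d k) * f3 (d k) - f2 (d k) * f2 (d k) > 0" for k unfolding f1_def f2_def f3_def using P0_coeffs(2)[OF p c] .
    have "a \<noteq> 0\<^sub>v n \<or> b \<noteq> 0\<^sub>v n"
    proof (rule ccontr)
      assume "\<not> (a \<noteq> 0\<^sub>v n \<or> b \<noteq> 0\<^sub>v n)"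
      then have "x = 0\<^sub>v (n+n)" unfolding xab by (intro eq_vecI) auto
      then show False using x0' by simp
    qed
    then have "\<exists>k<n. A k \<noteq> 0 \<or> B k \<noteq> 0"
    proof
      assume "a \<noteq> 0\<^sub>v n"
      then have "map_vec complex_of_real a \<noteq> 0\<^sub>v n" by simp
      then have "DFT n *\<^sub>v map_vec complex_of_real a \<noteq> 0\<^sub>v n" using U_inj_vec[of "map_vec complex_of_real a" n] a by auto
      then show ?thesis using exists_nonzero_idx[of "DFT n *\<^sub>v map_vec complex_of_real a" n] a unfolding A_def by auto
    next
      assume "b \<noteq> 0\<^sub>v n"
      then have "map_vec complex_of_real b \<noteq> 0\<^sub>v n" by simp
      then have "DFT n *\<^sub>v map_vec complex_of_real b \<noteq> 0\<^sub>v n" using U_inj_vec[of "map_vec complex_of_real b" n] b by auto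
      then show ?thesis using exists_nonzero_idx[of "DFT n *\<^sub>v map_vec complex_of_real b" n] b unfolding B_def by auto
    qed
    then obtain k where k: "k < n" and kk: "A k \<noteq> 0 \<or> B k \<noteq> 0" by blast
    have "(Re (A k) \<noteq> 0 \<or> Re (B k) \<noteq> 0) \<or> (Im (A k) \<noteq> 0 \<or> Im (B k) \<noteq> 0)"
      using kk by (auto simp: complex_eq_iff)
    then have "Fq (f1 (d k)) (f2 (d k)) (f3 (d k)) (Re (A k)) (Re (B k))
       + Fq (f1 (d k)) (f2 (d k)) (f3 (d k)) (Im (A k)) (Im (B k)) > 0"
      using Fq_pos[OF pos1 pos2] Fq_nonneg[OF pos1 pos2]
      by (metis add_nonneg_pos add_pos_nonneg)
    then show ?thesis
      using k Fq_nonneg[OF pos1 pos2]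
      by (intro sum_pos2[of "{0..<n}" k]) (auto intro: add_nonneg_nonneg)
  qed
  finally show "x \<bullet> (P0 n \<Pi>2 (\<Pi>3\<^sup>2) *\<^sub>v x) > 0" .
qed


lemma B_carrier: "Bmat n \<in> carrier_mat (n+n) n"
proof -
  have "four_block_mat (0\<^sub>m n n :: real mat) (0\<^sub>m n 0) (1\<^sub>m n) (0\<^sub>m n 0) \<in> carrier_mat (n+n) (n+0)"
    by (rule four_block_carrier_mat) auto
  then show ?thesis unfolding B_blocks by simp
qed

lemma A_carrier: "Amat n \<in> carrier_mat (n+n) (n+n)" by (simp add: Amat_def D2_def)
lemma Q_carrier: "Qmat n p \<in> carrier_mat (n+n) (n+n)" by (simp add: Qmat_def)
lemma G_carrier: "four_block_mat (0\<^sub>m n n) (0\<^sub>m n n) (0\<^sub>m n n) (rc n (\<lambda>_. c)) \<in> carrier_mat (n+n) (n+n)" by simp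

lemma PBRBP:
  assumes q: "\<Pi>3 > 0" and P: "P \<in> carrier_mat (n+n) (n+n)"
  shows "P * Bmat n * mat_inv (Rmat n \<Pi>3) * transpose_mat (Bmat n) * P
    = P * (Bmat n * mat_inv (Rmat n \<Pi>3) * transpose_mat (Bmat n)) * P"
proof -
  have R: "mat_inv (Rmat n \<Pi>3) \<in> carrier_mat n n" by (simp add: Rinv[OF q])
  have B: "Bmat n \<in> carrier_mat (n+n) n" by (rule B_carrier)
  have BT: "transpose_mat (Bmat n) \<in> carrier_mat n (n+n)" using B by simp
  have BR: "Bmat n * mat_inv (Rmat n \<Pi>3) \<in> carrier_mat (n+n) n" using B R by simp
  have "P * Bmat n * mat_inv (Rmat n \<Pi>3) = P * (Bmat n * mat_inv (Rmat n \<Pi>3))"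
    using P B R by (rule assoc_mult_mat)
  moreover have "P * (Bmat n * mat_inv (Rmat n \<Pi>3)) * transpose_mat (Bmat n) = P * (Bmat n * mat_inv (Rmat n \<Pi>3) * transpose_mat (Bmat n))"
    using P BR BT by (rule assoc_mult_mat)
  ultimately show ?thesis by simp
qed

lemma map_zero_mat: "map_mat complex_of_real (0\<^sub>m a b) = 0\<^sub>m a b" by (rule eq_matI) auto
lemma map_one_mat: "map_mat complex_of_real (1\<^sub>m a) = 1\<^sub>m a" by (rule eq_matI) auto

lemma P0_sym: "transpose_mat (P0 n p c) = P0 n p c"
  unfolding P0_def by (subst transpose_four_block_mat[of _ n n _ n _ n]) (auto simp: rc_transpose)

lemma G_sym: "transpose_mat (four_block_mat (0\<^sub>m n n) (0\<^sub>m n n) (0\<^sub>m n n) (rc n (\<lambda>_. c))) =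
   four_block_mat (0\<^sub>m n n) (0\<^sub>m n n) (0\<^sub>m n n) (rc n (\<lambda>_. c))"
  by (subst transpose_four_block_mat[of _ n n _ n _ n]) (auto simp: rc_transpose)

lemma Acl0:
  assumes n: "n > 0" and p: "\<Pi>2 > 0" and q: "\<Pi>3 > 0"
  shows "Amat n - four_block_mat (0\<^sub>m n n) (0\<^sub>m n n) (0\<^sub>m n n) (rc n (\<lambda>_. \<Pi>3\<^sup>2)) * P0 n \<Pi>2 (\<Pi>3\<^sup>2)
   = four_block_mat (0\<^sub>m n n) (1\<^sub>m n) (rc n (\<lambda>x. x - k1f (\<Pi>3\<^sup>2) x)) (rc n (\<lambda>x. 0 - k2f \<Pi>2 (\<Pi>3\<^sup>2) x))"
proof -
  have "Amat n - four_block_mat (0\<^sub>m n n) (0\<^sub>m n n) (0\<^sub>m n n) (rc n (\<lambda>_. \<Pi>3\<^sup>2)) * P0 n \<Pi>2 (\<Pi>3\<^sup>2)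
    = four_block_mat (0\<^sub>m n n) (1\<^sub>m n) (rc n (\<lambda>x. x)) (0\<^sub>m n n) -
      four_block_mat (0\<^sub>m n n) (0\<^sub>m n n) (rc n (k1f (\<Pi>3\<^sup>2))) (rc n (k2f \<Pi>2 (\<Pi>3\<^sup>2)))"
    unfolding A_blocks[OF n] GP0[OF n p q] ..
  also have "\<dots> = four_block_mat (0\<^sub>m n n) (1\<^sub>m n) (rc n (\<lambda>x. x - k1f (\<Pi>3\<^sup>2) x)) (rc n (\<lambda>x. 0 - k2f \<Pi>2 (\<Pi>3\<^sup>2) x))"
  proof -
    have e: "0\<^sub>m n n - rc n (k2f \<Pi>2 (\<Pi>3\<^sup>2)) = rc n (\<lambda>x. 0 - k2f \<Pi>2 (\<Pi>3\<^sup>2) x)"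
      using rc_diff[of n "\<lambda>_. 0" "k2f \<Pi>2 (\<Pi>3\<^sup>2)"] by (simp add: rc_zero)
    have e1: "1\<^sub>m n - 0\<^sub>m n n = (1\<^sub>m n :: real mat)" by (rule eq_matI) auto
    show ?thesis by (subst diff4[of _ n]) (auto simp: rc_diff e e1)
  qed
  finally show ?thesis .
qed

lemma hurwitz_P0:
  assumes n: "n > 0" and p: "\<Pi>2 > 0" and q: "\<Pi>3 > 0"
  shows "hurwitz (Amat n - four_block_mat (0\<^sub>m n n) (0\<^sub>m n n) (0\<^sub>m n n) (rc n (\<lambda>_. \<Pi>3\<^sup>2)) * P0 n \<Pi>2 (\<Pi>3\<^sup>2))"
  unfolding hurwitz_def Acl0[OF n p q]
proof (intro allI impI)
  define c where "c = \<Pi>3\<^sup>2"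
  have c: "c > 0" unfolding c_def using q by simp
  fix z assume ev: "eigenvalue (map_mat complex_of_real (four_block_mat (0\<^sub>m n n) (1\<^sub>m n)
      (rc n (\<lambda>x. x - k1f (\<Pi>3\<^sup>2) x)) (rc n (\<lambda>x. 0 - k2f \<Pi>2 (\<Pi>3\<^sup>2) x)))) z"
  have "map_mat complex_of_real (four_block_mat (0\<^sub>m n n) (1\<^sub>m n)
      (rc n (\<lambda>x. x - k1f (\<Pi>3\<^sup>2) x)) (rc n (\<lambda>x. 0 - k2f \<Pi>2 (\<Pi>3\<^sup>2) x)))
    = four_block_mat (0\<^sub>m n n) (1\<^sub>m n) (circ n (rf n (\<lambda>x. x - k1f c x))) (circ n (rf n (\<lambda>x. 0 - k2f \<Pi>2 c x)))"
    unfolding c_def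
    by (subst map_four_block_mat[of _ n n _ n _ n]) (auto simp: rc_of_real map_zero_mat map_one_mat)
  with ev have ev': "eigenvalue (four_block_mat (0\<^sub>m n n) (1\<^sub>m n) (circ n (rf n (\<lambda>x. x - k1f c x))) (circ n (rf n (\<lambda>x. 0 - k2f \<Pi>2 c x)))) z"
    by simp
  show "Re z < 0"
  proof (rule hurwitz_block[OF _ ev'])
    fix k w assume k: "k < n" and eq: "w * w - rf n (\<lambda>x. 0 - k2f \<Pi>2 c x) k * w - rf n (\<lambda>x. x - k1f c x) k = 0"
    define d where "d = Dhat n k"
    have "w * w + complex_of_real (k2f \<Pi>2 c d) * w + complex_of_real (k1f c d - d) = 0"
      using eq unfolding rf_def d_def by (simp add: algebra_simps)
    moreover have "k2f \<Pi>2 c d > 0" by (rule k2_pos[OF c p])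
    moreover have "k1f c d - d > 0" unfolding k1f_def using c by (simp add: add_nonneg_pos)
    ultimately show "Re w < 0" using quad_re_neg by blast
  qed
qed

lemma care_P0:
  assumes n: "n > 0" and p: "\<Pi>2 > 0" and q: "\<Pi>3 > 0"
  shows "care_solution (Amat n) (Bmat n) (Qmat n \<Pi>2) (Rmat n \<Pi>3) (P0 n \<Pi>2 (\<Pi>3\<^sup>2))"
proof -
  have dA: "dim_row (Amat n) = n + n" by (simp add: Amat_def D2_def)
  show ?thesis
    unfolding care_solution_def dA
  proof (intro conjI)
    show "P0 n \<Pi>2 (\<Pi>3\<^sup>2) \<in> carrier_mat (n + n) (n + n)" by simp
    show "transpose_mat (P0 n \<Pi>2 (\<Pi>3\<^sup>2)) = P0 n \<Pi>2 (\<Pi>3\<^sup>2)" by (rule P0_sym)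
    show "pos_def_mat (P0 n \<Pi>2 (\<Pi>3\<^sup>2))" by (rule P0_pd[OF n p q])
    show "P0 n \<Pi>2 (\<Pi>3\<^sup>2) * Amat n + transpose_mat (Amat n) * P0 n \<Pi>2 (\<Pi>3\<^sup>2) -
      P0 n \<Pi>2 (\<Pi>3\<^sup>2) * Bmat n * mat_inv (Rmat n \<Pi>3) * transpose_mat (Bmat n) * P0 n \<Pi>2 (\<Pi>3\<^sup>2) + Qmat n \<Pi>2 =
      0\<^sub>m (n + n) (n + n)"
      unfolding PBRBP[OF q P0_carrier] G_blocks[OF q] AT_blocks[OF n] unfolding A_blocks[OF n] Q_blocks
      using ARE_P0[OF n p q] by simp
    show "hurwitz (Amat n - Bmat n * mat_inv (Rmat n \<Pi>3) * transpose_mat (Bmat n) * P0 n \<Pi>2 (\<Pi>3\<^sup>2))"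
      unfolding G_blocks[OF q] by (rule hurwitz_P0[OF n p q])
  qed
qed

lemma gain_P0:
  assumes n: "n > 0" and p: "\<Pi>2 > 0" and q: "\<Pi>3 > 0"
  shows "map_mat complex_of_real (lqr_gain (Bmat n) (Rmat n \<Pi>3) (P0 n \<Pi>2 (\<Pi>3\<^sup>2))) = hcat (K1mat n \<Pi>3) (K2mat n \<Pi>2 \<Pi>3)"
proof -
  have K1: "K1mat n \<Pi>3 = circ n (rf n (k1f (\<Pi>3\<^sup>2)))"
  proof -
    have "rf n (k1f (\<Pi>3\<^sup>2)) = (\<lambda>\<kappa>. complex_of_real (K0hat n \<Pi>3 \<kappa>))"
      by (simp add: fun_eq_iff rf_def k1f_def K0hat_def)
    then show ?thesis by (simp add: K1mat_def circ_def mat_inv_DFT)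
  qed
  have K2: "K2mat n \<Pi>2 \<Pi>3 = circ n (rf n (k2f \<Pi>2 (\<Pi>3\<^sup>2)))"
  proof -
    have "rf n (k2f \<Pi>2 (\<Pi>3\<^sup>2)) = (\<lambda>\<kappa>. complex_of_real (sqrt (2 * K0hat n \<Pi>3 \<kappa> + \<Pi>2 * \<Pi>3\<^sup>2)))"
      by (simp add: fun_eq_iff rf_def k1f_def k2f_def K0hat_def)
    then show ?thesis by (simp add: K2mat_def circ_def mat_inv_DFT)
  qed
  have "lqr_gain (Bmat n) (Rmat n \<Pi>3) (P0 n \<Pi>2 (\<Pi>3\<^sup>2)) =
      four_block_mat (rc n (k1f (\<Pi>3\<^sup>2))) (rc n (k2f \<Pi>2 (\<Pi>3\<^sup>2))) (0\<^sub>m 0 n) (0\<^sub>m 0 n)"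
    unfolding gain_blocks[OF q P0_carrier] gainP0[OF n p q] ..
  then have "map_mat complex_of_real (lqr_gain (Bmat n) (Rmat n \<Pi>3) (P0 n \<Pi>2 (\<Pi>3\<^sup>2))) =
      four_block_mat (circ n (rf n (k1f (\<Pi>3\<^sup>2)))) (circ n (rf n (k2f \<Pi>2 (\<Pi>3\<^sup>2)))) (0\<^sub>m 0 n) (0\<^sub>m 0 n)"
    by (simp add: map_four_block_mat[of _ n n _ n _ 0] rc_of_real map_zero_mat)
  also have "\<dots> = hcat (K1mat n \<Pi>3) (K2mat n \<Pi>2 \<Pi>3)"
    unfolding hcat_def K1 K2 by simp
  finally show ?thesis .
qed


lemma care_unique:
  assumes n: "n > 0" and p: "\<Pi>2 > 0" and q: "\<Pi>3 > 0"
    and cs: "care_solution (Amat n) (Bmat n) (Qmat n \<Pi>2) (Rmat n \<Pi>3) P"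
  shows "P = P0 n \<Pi>2 (\<Pi>3\<^sup>2)"
proof -
  define m where "m = n + n"
  define A where "A = Amat n"
  define G where "G = Bmat n * mat_inv (Rmat n \<Pi>3) * transpose_mat (Bmat n)"
  define Q where "Q = Qmat n \<Pi>2"
  define P1 where "P1 = P0 n \<Pi>2 (\<Pi>3\<^sup>2)"
  have dA: "dim_row (Amat n) = m" unfolding m_def by (simp add: Amat_def D2_def)
  have Ac: "A \<in> carrier_mat m m" unfolding A_def m_def by (rule A_carrier)
  have Gc: "G \<in> carrier_mat m m" unfolding G_def G_blocks[OF q] m_def by simp
  have Qc: "Q \<in> carrier_mat m m" unfolding Q_def m_def by (rule Q_carrier)
  have P1c: "P1 \<in> carrier_mat m m" unfolding P1_def m_def by simp
  have Gs: "transpose_mat G = G" unfolding G_def G_blocks[OF q] by (rule G_sym)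
  have P1s: "transpose_mat P1 = P1" unfolding P1_def by (rule P0_sym)
  from cs have Pc: "P \<in> carrier_mat m m" and
    are: "P * A + transpose_mat A * P - P * Bmat n * mat_inv (Rmat n \<Pi>3) * transpose_mat (Bmat n) * P + Q = 0\<^sub>m m m"
    and hP: "hurwitz (A - G * P)"
    unfolding care_solution_def dA A_def G_def Q_def by auto
  from care_P0[OF n p q] have
    are1: "P1 * A + transpose_mat A * P1 - P1 * Bmat n * mat_inv (Rmat n \<Pi>3) * transpose_mat (Bmat n) * P1 + Q = 0\<^sub>m m m"
    and hP1: "hurwitz (A - G * P1)"
    unfolding care_solution_def dA A_def G_def Q_def P1_def by auto
  have areP: "P * A + transpose_mat A * P - P * G * P + Q = 0\<^sub>m m m"
    using are unfolding G_def PBRBP[OF q Pc[unfolded m_def]] .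
  have areP1: "P1 * A + transpose_mat A * P1 - P1 * G * P1 + Q = 0\<^sub>m m m"
    using are1 unfolding G_def PBRBP[OF q P1c[unfolded m_def]] .
  have syl: "(P - P1) * (A - G * P) + transpose_mat (A - G * P1) * (P - P1) = 0\<^sub>m m m"
    by (rule are_diff[OF Ac Gc Pc P1c Qc Gs P1s areP areP1])
  define X where "X = map_mat complex_of_real (P - P1)"
  define M where "M = map_mat complex_of_real (A - G * P)"
  define N where "N = map_mat complex_of_real (transpose_mat (A - G * P1))"
  have GP: "G * P \<in> carrier_mat m m" using Gc Pc by simp
  have GP1: "G * P1 \<in> carrier_mat m m" using Gc P1c by simp
  have Xc: "P - P1 \<in> carrier_mat m m" by (rule minus_carrier_mat[OF P1c])
  have Mc: "A - G * P \<in> carrier_mat m m" by (rule minus_carrier_mat[OF GP])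
  have Nc: "transpose_mat (A - G * P1) \<in> carrier_mat m m" using minus_carrier_mat[OF GP1, of A] by simp
  have "map_mat complex_of_real ((P - P1) * (A - G * P) + transpose_mat (A - G * P1) * (P - P1)) = X * M + N * X"
    unfolding X_def M_def N_def
    by (simp add: map_of_real_add[of _ m m] of_real_hom.mat_hom_mult[OF Xc Mc] of_real_hom.mat_hom_mult[OF Nc Xc]
        mult_carrier_mat[OF Xc Mc] mult_carrier_mat[OF Nc Xc])
  then have XMN: "X * M + N * X = 0\<^sub>m m m" unfolding syl by (simp add: map_zero_mat)
  have X0: "X = 0\<^sub>m m m"
  proof (rule sylvester_zero[OF _ _ _ XMN])
    show "X \<in> carrier_mat m m" "M \<in> carrier_mat m m" "N \<in> carrier_mat m m"
      unfolding X_def M_def N_def using Xc Mc Nc by auto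
    show "Re z < 0" if "eigenvalue M z" for z using hP that unfolding hurwitz_def M_def by blast
    show "Re z < 0" if "eigenvalue N z" for z
    proof -
      have N': "N = transpose_mat (map_mat complex_of_real (A - G * P1))" unfolding N_def by (rule eq_matI) auto
      have "eigenvalue (map_mat complex_of_real (A - G * P1)) z"
        using that unfolding N' by (subst (asm) eigenvalue_transpose[of _ m]) (use minus_carrier_mat[OF GP1, of A] in auto)
      then show ?thesis using hP1 unfolding hurwitz_def by blast
    qed
  qed
  have "P - P1 = 0\<^sub>m m m"
  proof (rule of_real_hom.mat_hom_inj)
    have z: "map_mat complex_of_real (0\<^sub>m m m) = 0\<^sub>m m m" by (rule eq_matI) auto
    show "map_mat complex_of_real (P - P1) = map_mat complex_of_real (0\<^sub>m m m)"
      unfolding z using X0 unfolding X_def .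
  qed
  then have "P = P1"
  proof -
    assume d: "P - P1 = 0\<^sub>m m m"
    show "P = P1"
    proof (rule eq_matI)
      fix i j assume "i < dim_row P1" "j < dim_col P1"
      then have ij: "i < m" "j < m" using P1c by auto
      have "(P - P1) $$ (i,j) = 0" using d ij by simp
      then show "P $$ (i,j) = P1 $$ (i,j)" using ij Pc P1c by simp
    qed (use Pc P1c in auto)
  qed
  then show ?thesis unfolding P1_def .
qed

theorem lemma1:
  fixes n :: nat and \<Pi>2 \<Pi>3 :: real
  assumes "n \<ge> 2" and "\<Pi>2 > 0" and "\<Pi>3 > 0"
  shows "(\<exists>P. care_solution (Amat n) (Bmat n) (Qmat n \<Pi>2) (Rmat n \<Pi>3) P) \<and>
         (\<forall>P. care_solution (Amat n) (Bmat n) (Qmat n \<Pi>2) (Rmat n \<Pi>3) P \<longrightarrow>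
              map_mat complex_of_real (lqr_gain (Bmat n) (Rmat n \<Pi>3) P) =
              hcat (K1mat n \<Pi>3) (K2mat n \<Pi>2 \<Pi>3))"
proof -
  have n: "n > 0" using assms(1) by simp
  show ?thesis
  proof (intro conjI allI impI)
    show "\<exists>P. care_solution (Amat n) (Bmat n) (Qmat n \<Pi>2) (Rmat n \<Pi>3) P"
      using care_P0[OF n assms(2,3)] by blast
    fix P assume "care_solution (Amat n) (Bmat n) (Qmat n \<Pi>2) (Rmat n \<Pi>3) P"
    then have "P = P0 n \<Pi>2 (\<Pi>3\<^sup>2)" by (rule care_unique[OF n assms(2,3)])
    then show "map_mat complex_of_real (lqr_gain (Bmat n) (Rmat n \<Pi>3) P) = hcat (K1mat n \<Pi>3) (K2mat n \<Pi>2 \<Pi>3)"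
      using gain_P0[OF n assms(2,3)] by simp
  qed
qed


end
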